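(* Let $p,q\ge2$ be coprime, $\widetilde\Gamma=\langle\alpha,\beta\mid\alpha^p=\beta^q\rangle$ with $c=\alpha^p$, and let $r\ge1$ be an integer coprime to both $p$ and $q$. Let $G_r$ be the subgroup generated by $\alpha_r=\alpha^r$ and $\beta_r=\beta^r$. Then $\alpha\mapsto\alpha_r$, $\beta\mapsto\beta_r$ defines an isomorphism $\widetilde\Gamma\to G_r$, so $G_r\cong\langle\alpha_r,\beta_r\mid\alpha_r^p=\beta_r^q\rangle$, and: (i) $Z(G_r)=\langle c^r\rangle\subseteq Z(\widetilde\Gamma)$; (ii) $G_r'=\widetilde\Gamma'$; (iii) $G_r/G_r'$ is generated by the image of $x_r=\alpha_r^{q_1}\beta_r^{p_1}$ (where $pp_1+qq_1=1$), and the normal closure of $x_r$ in $\widetilde\Gamma$ and in $G_r$ both equal $G_r$; (iv) $G_r$ is normal in $\widetilde\Gamma$ and $\widetilde\Gamma/G_r\cong H/H_r\cong Z(\widetilde\Gamma)/Z(G_r)\cong\mathbb Z_r$, where $H=\widetilde\Gamma/\widetilde\Gamma'$, $H_r=G_r/G_r'$; (v) the projection $\widetilde\Gamma\to\widetilde\Gamma/Z(\widetilde\Gamma)\cong\Gamma_{p,q}$ maps $G_r$ onto $\Gamma_{p,q}$.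
   Context: $Z(\cdot)$ denotes the center and $(\cdot)'$ the commutator subgroup. The center of $\widetilde\Gamma$ is $\langle c\rangle$, and $\widetilde\Gamma/\langle c\rangle\cong\Gamma_{p,q}=\langle\alpha_0,\beta_0\mid\alpha_0^p=\beta_0^q=1\rangle$ via $\alpha\mapsto\alpha_0$, $\beta\mapsto\beta_0$. *)

theory Defs
  imports "HOL-Algebra.Algebra"
begin

datatype gen = Alpha | Beta

type_synonym letter = "gen \<times> bool"  \<comment> \<open>(generator, True = inverse letter)\<close>

definition letter_inv :: "letter \<Rightarrow> letter" where
  "letter_inv x = (fst x, \<not> snd x)"

inductive word_eq :: "nat \<Rightarrow> nat \<Rightarrow> letter list \<Rightarrow> letter list \<Rightarrow> bool" for p q where
  refl: "word_eq p q w w"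
| sym: "word_eq p q u v \<Longrightarrow> word_eq p q v u"
| trans: "word_eq p q u v \<Longrightarrow> word_eq p q v w \<Longrightarrow> word_eq p q u w"
| cancel: "word_eq p q (u @ [x, letter_inv x] @ v) (u @ v)"
| rel: "word_eq p q (u @ replicate p (Alpha, False) @ v) (u @ replicate q (Beta, False) @ v)"

definition word_class :: "nat \<Rightarrow> nat \<Rightarrow> letter list \<Rightarrow> letter list set" where
  "word_class p q w = {v. word_eq p q w v}"

definition Gt :: "nat \<Rightarrow> nat \<Rightarrow> letter list set monoid" where
  "Gt p q = \<lparr> carrier = range (word_class p q),
              monoid.mult = (\<lambda>A B. {w. \<exists>a\<in>A. \<exists>b\<in>B. word_eq p q (a @ b) w}),
              one = word_class p q [] \<rparr>"

definition galpha :: "nat \<Rightarrow> nat \<Rightarrow> letter list set" where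
  "galpha p q = word_class p q [(Alpha, False)]"

definition gbeta :: "nat \<Rightarrow> nat \<Rightarrow> letter list set" where
  "gbeta p q = word_class p q [(Beta, False)]"

definition center :: "('a, 'b) monoid_scheme \<Rightarrow> 'a set" where
  "center G = {z \<in> carrier G. \<forall>g \<in> carrier G. z \<otimes>\<^bsub>G\<^esub> g = g \<otimes>\<^bsub>G\<^esub> z}"

definition normal_closure :: "('a, 'b) monoid_scheme \<Rightarrow> 'a set \<Rightarrow> 'a set" where
  "normal_closure G S = generate G (\<Union>g \<in> carrier G. (\<lambda>s. g \<otimes>\<^bsub>G\<^esub> s \<otimes>\<^bsub>G\<^esub> inv\<^bsub>G\<^esub> g) ` S)"

end

theory Submission
  imports Defs
begin


lemma word_eq_append_left: "word_eq p q u v \<Longrightarrow> word_eq p q (s @ u) (s @ v)"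
proof (induction rule: word_eq.induct)
  case (cancel u x v) show ?case using word_eq.cancel[of p q "s@u" x v] by simp
next
  case (rel u v) show ?case using word_eq.rel[of p q "s@u" v] by simp
qed (auto intro: word_eq.intros)

lemma word_eq_append_right: "word_eq p q u v \<Longrightarrow> word_eq p q (u @ t) (v @ t)"
proof (induction rule: word_eq.induct)
  case (cancel u x v) show ?case using word_eq.cancel[of p q u x "v@t"] by simp
next
  case (rel u v) show ?case using word_eq.rel[of p q u "v@t"] by simp
qed (auto intro: word_eq.intros)

lemma word_eq_append: "word_eq p q a a' \<Longrightarrow> word_eq p q b b' \<Longrightarrow> word_eq p q (a @ b) (a' @ b')"
  by (meson word_eq.trans word_eq_append_left word_eq_append_right)

lemma word_class_eq_iff: "word_class p q u = word_class p q v \<longleftrightarrow> word_eq p q u v"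
  unfolding word_class_def
  by (auto intro: word_eq.intros)

lemma in_word_class: "w \<in> word_class p q u \<longleftrightarrow> word_eq p q u w"
  by (simp add: word_class_def)

lemma Gt_mult: "word_class p q u \<otimes>\<^bsub>Gt p q\<^esub> word_class p q v = word_class p q (u @ v)"
  unfolding Gt_def word_class_def
  by auto (meson word_eq.sym word_eq.trans word_eq_append, meson word_eq.refl)

lemma Gt_one: "\<one>\<^bsub>Gt p q\<^esub> = word_class p q []" by (simp add: Gt_def)
lemma Gt_carrier: "carrier (Gt p q) = range (word_class p q)" by (simp add: Gt_def)

definition winv :: "letter list \<Rightarrow> letter list" where
  "winv w = rev (map letter_inv w)"

lemma letter_inv_inv[simp]: "letter_inv (letter_inv x) = x"
  by (simp add: letter_inv_def)

lemma winv_cancel: "word_eq p q (winv w @ w) []"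
proof (induction w)
  case Nil then show ?case by (simp add: winv_def word_eq.refl)
next
  case (Cons x w)
  have "winv (x # w) @ x # w = winv w @ [letter_inv x, letter_inv (letter_inv x)] @ w"
    by (simp add: winv_def)
  moreover have "word_eq p q (winv w @ [letter_inv x, letter_inv (letter_inv x)] @ w) (winv w @ w)"
    by (rule word_eq.cancel)
  ultimately show ?case using Cons word_eq.trans by metis
qed

lemma group_Gt: "group (Gt p q)"
proof (rule groupI)
  fix x y assume "x \<in> carrier (Gt p q)" "y \<in> carrier (Gt p q)"
  then show "x \<otimes>\<^bsub>Gt p q\<^esub> y \<in> carrier (Gt p q)" by (auto simp: Gt_carrier Gt_mult)
next
  show "\<one>\<^bsub>Gt p q\<^esub> \<in> carrier (Gt p q)" by (simp add: Gt_carrier Gt_one)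
next
  fix x y z assume "x \<in> carrier (Gt p q)" "y \<in> carrier (Gt p q)" "z \<in> carrier (Gt p q)"
  then show "x \<otimes>\<^bsub>Gt p q\<^esub> y \<otimes>\<^bsub>Gt p q\<^esub> z = x \<otimes>\<^bsub>Gt p q\<^esub> (y \<otimes>\<^bsub>Gt p q\<^esub> z)"
    by (auto simp: Gt_carrier Gt_mult)
next
  fix x assume "x \<in> carrier (Gt p q)"
  then show "\<one>\<^bsub>Gt p q\<^esub> \<otimes>\<^bsub>Gt p q\<^esub> x = x" by (auto simp: Gt_carrier Gt_mult Gt_one)
next
  fix x assume "x \<in> carrier (Gt p q)"
  then obtain w where w: "x = word_class p q w" by (auto simp: Gt_carrier)
  show "\<exists>y\<in>carrier (Gt p q). y \<otimes>\<^bsub>Gt p q\<^esub> x = \<one>\<^bsub>Gt p q\<^esub>"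
    by (rule bexI[of _ "word_class p q (winv w)"])
       (auto simp: w Gt_mult Gt_one Gt_carrier word_class_eq_iff winv_cancel)
qed

section \<open>Universal property\<close>

fun ev :: "('k,'m) monoid_scheme \<Rightarrow> 'k \<Rightarrow> 'k \<Rightarrow> letter list \<Rightarrow> 'k" where
  "ev K x y [] = \<one>\<^bsub>K\<^esub>"
| "ev K x y (l # w) = (if snd l then inv\<^bsub>K\<^esub> (if fst l = Alpha then x else y)
                        else (if fst l = Alpha then x else y)) \<otimes>\<^bsub>K\<^esub> ev K x y w"

context group begin

lemma ev_closed: "x \<in> carrier G \<Longrightarrow> y \<in> carrier G \<Longrightarrow> ev G x y w \<in> carrier G"
  by (induction w) auto

lemma ev_append: "x \<in> carrier G \<Longrightarrow> y \<in> carrier G \<Longrightarrow> ev G x y (u @ v) = ev G x y u \<otimes> ev G x y v"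
  by (induction u) (auto simp: ev_closed m_assoc)

lemma ev_rep: "x \<in> carrier G \<Longrightarrow> y \<in> carrier G \<Longrightarrow> ev G x y (replicate n (g, False)) = (if g = Alpha then x else y) [^] n"
  proof (induction n)
  case (Suc n)
  then show ?case by (cases "g = Alpha") (simp_all add: nat_pow_Suc2[symmetric])
qed simp

lemma ev_word_eq:
  assumes "x \<in> carrier G" "y \<in> carrier G" "x [^] p = y [^] q"
  shows "word_eq p q u v \<Longrightarrow> ev G x y u = ev G x y v"
proof (induction rule: word_eq.induct)
  case (cancel u l v)
  have "ev G x y [l, letter_inv l] = \<one>"
    using assms by (cases l; cases "fst l"; cases "snd l") (auto simp: letter_inv_def)
  have "ev G x y (u @ [l, letter_inv l] @ v) = ev G x y u \<otimes> (ev G x y [l, letter_inv l] \<otimes> ev G x y v)"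
    using assms by (simp only: ev_append)
  then show ?case using assms \<open>ev G x y [l, letter_inv l] = \<one>\<close> by (simp add: ev_append ev_closed)
next
  case (rel u v)
  show ?case using assms by (simp add: ev_append ev_rep)
qed auto

end

definition Gfun :: "('k,'m) monoid_scheme \<Rightarrow> 'k \<Rightarrow> 'k \<Rightarrow> letter list set \<Rightarrow> 'k" where
  "Gfun K x y A = ev K x y (SOME w. w \<in> A)"

lemma Gfun_class:
  assumes "group K" "x \<in> carrier K" "y \<in> carrier K" "x [^]\<^bsub>K\<^esub> p = y [^]\<^bsub>K\<^esub> q"
  shows "Gfun K x y (word_class p q w) = ev K x y w"
proof -
  have "w \<in> word_class p q w" by (simp add: in_word_class word_eq.refl)
  then have "(SOME w'. w' \<in> word_class p q w) \<in> word_class p q w" by (rule someI)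
  then show ?thesis unfolding Gfun_def in_word_class
    using group.ev_word_eq[OF assms] by (metis word_eq.sym)
qed

lemma Gfun_hom:
  assumes "group K" "x \<in> carrier K" "y \<in> carrier K" "x [^]\<^bsub>K\<^esub> p = y [^]\<^bsub>K\<^esub> q"
  shows "Gfun K x y \<in> hom (Gt p q) K"
proof (rule homI)
  fix A assume "A \<in> carrier (Gt p q)"
  then show "Gfun K x y A \<in> carrier K"
    using Gfun_class[OF assms] group.ev_closed[OF assms(1-3)] by (auto simp: Gt_carrier)
next
  fix A B assume "A \<in> carrier (Gt p q)" "B \<in> carrier (Gt p q)"
  then show "Gfun K x y (A \<otimes>\<^bsub>Gt p q\<^esub> B) = Gfun K x y A \<otimes>\<^bsub>K\<^esub> Gfun K x y B"
    using Gfun_class[OF assms] group.ev_append[OF assms(1-3)] by (auto simp: Gt_carrier Gt_mult)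
qed

lemma Gfun_alpha:
  assumes "group K" "x \<in> carrier K" "y \<in> carrier K" "x [^]\<^bsub>K\<^esub> p = y [^]\<^bsub>K\<^esub> q"
  shows "Gfun K x y (galpha p q) = x" "Gfun K x y (gbeta p q) = y"
  using Gfun_class[OF assms] assms by (auto simp: galpha_def gbeta_def group.is_monoid monoid.r_one)


lemma (in group) commute_generate:
  assumes "z \<in> carrier G" "S \<subseteq> carrier G" "\<And>s. s \<in> S \<Longrightarrow> z \<otimes> s = s \<otimes> z"
  shows "g \<in> generate G S \<Longrightarrow> z \<otimes> g = g \<otimes> z"
proof (induction rule: generate.induct)
  case (inv h)
  have h: "h \<in> carrier G" using inv assms by auto
  have zh: "z \<otimes> h = h \<otimes> z" using inv assms by auto
  have "z \<otimes> inv h = inv h \<otimes> h \<otimes> z \<otimes> inv h" using h assms by (metis l_inv l_one)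
  also have "\<dots> = inv h \<otimes> (h \<otimes> z) \<otimes> inv h" using h assms by (metis m_assoc inv_closed)
  also have "\<dots> = inv h \<otimes> (z \<otimes> h) \<otimes> inv h" using zh by simp
  also have "\<dots> = inv h \<otimes> z" using h assms by (simp add: m_assoc)
  finally show ?case .
next
  case (eng h1 h2)
  have "h1 \<in> carrier G" "h2 \<in> carrier G" using eng generate_in_carrier assms by auto
  then show ?case using eng assms by (metis m_assoc)
qed (use assms in auto)

lemma (in group_hom) hom_eq_on_generate:
  assumes "h' \<in> hom G H" "S \<subseteq> carrier G" "\<And>s. s \<in> S \<Longrightarrow> h s = h' s"
  shows "g \<in> generate G S \<Longrightarrow> h g = h' g"
proof -
  interpret h': group_hom G H h' using assms(1) by (simp add: group_hom_def group_hom_axioms_def)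
  show "g \<in> generate G S \<Longrightarrow> h g = h' g"
  proof (induction rule: generate.induct)
    case one then show ?case by simp
  next
    case (incl h0) then show ?case using assms by auto
  next
    case (inv h0)
    then show ?case using assms by auto
  next
    case (eng h1 h2)
    have "h1 \<in> carrier G" "h2 \<in> carrier G" using eng G.generate_in_carrier assms by auto
    then show ?case using eng by simp
  qed
qed

locale tg =
  fixes p q :: nat
  assumes p2: "p \<ge> 2" and q2: "q \<ge> 2" and cop: "coprime p q"
begin

abbreviation "T \<equiv> Gt p q"
abbreviation "a \<equiv> galpha p q"
abbreviation "b \<equiv> gbeta p q"

sublocale T: group "Gt p q" by (rule group_Gt)

definition c where "c = a [^]\<^bsub>T\<^esub> p"

lemma cls_in[simp]: "word_class p q w \<in> carrier T" by (simp add: Gt_carrier)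
lemma a_in[simp]: "a \<in> carrier T" by (simp add: galpha_def)
lemma b_in[simp]: "b \<in> carrier T" by (simp add: gbeta_def)
lemma c_in[simp]: "c \<in> carrier T" by (simp add: c_def)

lemma cls_Cons: "word_class p q (l # w) = word_class p q [l] \<otimes>\<^bsub>T\<^esub> word_class p q w"
  by (simp add: Gt_mult)

lemma cls_append: "word_class p q (u @ w) = word_class p q u \<otimes>\<^bsub>T\<^esub> word_class p q w"
  by (simp add: Gt_mult)

lemma cls_Nil: "word_class p q [] = \<one>\<^bsub>T\<^esub>" by (simp add: Gt_one)

lemma cls_rep: "word_class p q (replicate n (g, False)) = (if g = Alpha then a else b) [^]\<^bsub>T\<^esub> n"
proof (induction n)
  case 0 then show ?case by (simp add: cls_Nil)
next
  case (Suc n)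
  have X: "word_class p q [(g,False)] = (if g = Alpha then a else b)"
    by (cases g) (simp_all add: galpha_def gbeta_def)
  have "word_class p q (replicate (Suc n) (g,False)) = word_class p q [(g,False)] \<otimes>\<^bsub>T\<^esub> word_class p q (replicate n (g,False))"
    by (simp add: Gt_mult)
  also have "\<dots> = (if g = Alpha then a else b) \<otimes>\<^bsub>T\<^esub> (if g = Alpha then a else b) [^]\<^bsub>T\<^esub> n"
    using X Suc by simp
  also have "\<dots> = (if g = Alpha then a else b) [^]\<^bsub>T\<^esub> Suc n"
    by (rule T.nat_pow_Suc2[symmetric]) simp
  finally show ?case .
qed

lemma cls_inv_letter: "word_class p q [(g, True)] = inv\<^bsub>T\<^esub> (word_class p q [(g, False)])"
proof -
  have "word_class p q [(g, True)] \<otimes>\<^bsub>T\<^esub> word_class p q [(g, False)] = \<one>\<^bsub>T\<^esub>"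
    using word_eq.cancel[of p q "[]" "(g,True)" "[]"]
    by (simp add: Gt_mult Gt_one word_class_eq_iff letter_inv_def)
  then show ?thesis by (simp add: T.inv_char T.inv_equality)
qed

lemma c_b: "c = b [^]\<^bsub>T\<^esub> q"
proof -
  have "word_class p q (replicate p (Alpha, False)) = word_class p q (replicate q (Beta, False))"
    using word_eq.rel[of p q "[]" "[]"] by (simp add: word_class_eq_iff)
  then show ?thesis by (simp add: c_def cls_rep)
qed

lemma gen_ab: "generate T {a, b} = carrier T"
proof
  show "generate T {a, b} \<subseteq> carrier T" using T.generate_incl[of "{a,b}"] by auto
next
  have "word_class p q w \<in> generate T {a, b}" for w
  proof (induction w)
    case Nil then show ?case by (simp add: cls_Nil generate.one)
  next
    case (Cons l w)
    obtain g s where l: "l = (g, s)" by (cases l)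
    have g: "word_class p q [(g, False)] \<in> generate T {a, b}"
      by (cases g) (auto simp: galpha_def gbeta_def intro: generate.incl)
    have "word_class p q [l] \<in> generate T {a, b}"
      using g by (cases s) (auto simp: l cls_inv_letter intro: T.generate_m_inv_closed)
    then show ?case using Cons cls_Cons[of l w] generate.eng by metis
  qed
  then show "carrier T \<subseteq> generate T {a, b}" by (auto simp: Gt_carrier)
qed

lemma subgroup_ab: "subgroup H T \<Longrightarrow> a \<in> H \<Longrightarrow> b \<in> H \<Longrightarrow> H = carrier T"
  using T.generate_subgroup_incl[of "{a,b}" H] gen_ab subgroup.subset by blast

lemma c_central: "g \<in> carrier T \<Longrightarrow> c \<otimes>\<^bsub>T\<^esub> g = g \<otimes>\<^bsub>T\<^esub> c"
proof -
  have "c \<otimes>\<^bsub>T\<^esub> s = s \<otimes>\<^bsub>T\<^esub> c" if "s \<in> {a, b}" for s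
  proof -
    have 1: "c \<otimes>\<^bsub>T\<^esub> a = a \<otimes>\<^bsub>T\<^esub> c" unfolding c_def
      by (metis T.nat_pow_Suc T.nat_pow_Suc2 a_in)
    have 2: "c \<otimes>\<^bsub>T\<^esub> b = b \<otimes>\<^bsub>T\<^esub> c" unfolding c_b
      by (metis T.nat_pow_Suc T.nat_pow_Suc2 b_in)
    show ?thesis using that 1 2 by auto
  qed
  then show "g \<in> carrier T \<Longrightarrow> c \<otimes>\<^bsub>T\<^esub> g = g \<otimes>\<^bsub>T\<^esub> c"
    using T.commute_generate[of c "{a,b}" g] gen_ab by auto
qed

lemma c_pow_central: "g \<in> carrier T \<Longrightarrow> c [^]\<^bsub>T\<^esub> (m::int) \<otimes>\<^bsub>T\<^esub> g = g \<otimes>\<^bsub>T\<^esub> c [^]\<^bsub>T\<^esub> m"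
proof -
  assume g: "g \<in> carrier T"
  have "c [^]\<^bsub>T\<^esub> m \<in> generate T {c}" using T.generate_pow[of c] by auto
  then show ?thesis using T.commute_generate[of g "{c}" "c [^]\<^bsub>T\<^esub> m"] g c_central by auto
qed

text \<open>The abelianisation map to the integers\<close>

definition lam where "lam = Gfun integer_group (int q) (int p)"

lemma lam_hom: "lam \<in> hom T integer_group"
  unfolding lam_def by (rule Gfun_hom) auto

sublocale lamh: group_hom T integer_group lam
  by (simp add: group_hom_def group_hom_axioms_def lam_hom)

lemma lam_a[simp]: "lam a = int q" and lam_b[simp]: "lam b = int p"
  unfolding lam_def by (rule Gfun_alpha; auto)+

lemma lam_mult: "x \<in> carrier T \<Longrightarrow> y \<in> carrier T \<Longrightarrow> lam (x \<otimes>\<^bsub>T\<^esub> y) = lam x + lam y"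
  by simp

lemma lam_ipow: "x \<in> carrier T \<Longrightarrow> lam (x [^]\<^bsub>T\<^esub> (n::int)) = n * lam x"
  by (simp add: lamh.hom_int_pow)

lemma lam_npow: "x \<in> carrier T \<Longrightarrow> lam (x [^]\<^bsub>T\<^esub> (n::nat)) = int n * lam x"
  by (simp add: lamh.hom_nat_pow)

lemma lam_inv: "x \<in> carrier T \<Longrightarrow> lam (inv\<^bsub>T\<^esub> x) = - lam x"
  by simp

lemma lam_c[simp]: "lam c = int p * int q"
  by (simp add: c_def lam_npow)

lemma c_pow_eq_one: "c [^]\<^bsub>T\<^esub> (m::int) = \<one>\<^bsub>T\<^esub> \<Longrightarrow> m = 0"
proof -
  assume "c [^]\<^bsub>T\<^esub> m = \<one>\<^bsub>T\<^esub>"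
  then have "lam (c [^]\<^bsub>T\<^esub> m) = 0" by simp
  then show "m = 0" using p2 q2 by (simp add: lam_ipow)
qed

end


locale tgr = tg +
  fixes r :: nat
  assumes r1: "r \<ge> 1" and crp: "coprime r p" and crq: "coprime r q"
begin

abbreviation "ar \<equiv> a [^]\<^bsub>T\<^esub> r"
abbreviation "br \<equiv> b [^]\<^bsub>T\<^esub> r"
abbreviation "Gr \<equiv> generate T {ar, br}"

lemma ar_in[simp]: "ar \<in> carrier T" and br_in[simp]: "br \<in> carrier T" by auto

lemma pow_rel: "(a [^]\<^bsub>T\<^esub> (n::nat)) [^]\<^bsub>T\<^esub> p = c [^]\<^bsub>T\<^esub> n" "(b [^]\<^bsub>T\<^esub> (n::nat)) [^]\<^bsub>T\<^esub> q = c [^]\<^bsub>T\<^esub> n"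
  by (simp add: T.nat_pow_pow c_def mult.commute, simp add: T.nat_pow_pow c_b mult.commute)

definition phi where "phi = Gfun T ar br"

lemma phi_hom: "phi \<in> hom T T"
  unfolding phi_def by (rule Gfun_hom) (auto simp: pow_rel)

sublocale phih: group_hom T T phi
  by (simp add: group_hom_def group_hom_axioms_def phi_hom)

lemma phi_a[simp]: "phi a = ar" and phi_b[simp]: "phi b = br"
  unfolding phi_def by (rule Gfun_alpha; auto simp: pow_rel)+

lemma phi_image: "phi ` carrier T = Gr"
proof -
  have "generate T (phi ` {a, b}) = phi ` generate T {a, b}"
    by (rule phih.generate_img) auto
  then show ?thesis by (simp add: gen_ab)
qed

lemma Gr_subgroup: "subgroup Gr T" by (rule T.generate_is_subgroup) auto

definition chi where "chi k g = g \<otimes>\<^bsub>T\<^esub> c [^]\<^bsub>T\<^esub> (int k * lam g)"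

lemma chi_hom: "chi k \<in> hom T T"
proof (rule homI)
  fix x assume "x \<in> carrier T" then show "chi k x \<in> carrier T" by (simp add: chi_def)
next
  fix x y assume x: "x \<in> carrier T" and y: "y \<in> carrier T"
  have "chi k (x \<otimes>\<^bsub>T\<^esub> y) = x \<otimes>\<^bsub>T\<^esub> y \<otimes>\<^bsub>T\<^esub> (c [^]\<^bsub>T\<^esub> (int k * lam x) \<otimes>\<^bsub>T\<^esub> c [^]\<^bsub>T\<^esub> (int k * lam y))"
    using x y by (simp add: chi_def T.int_pow_mult distrib_left)
  also have "\<dots> = x \<otimes>\<^bsub>T\<^esub> (y \<otimes>\<^bsub>T\<^esub> c [^]\<^bsub>T\<^esub> (int k * lam x)) \<otimes>\<^bsub>T\<^esub> c [^]\<^bsub>T\<^esub> (int k * lam y)"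
    using x y by (simp add: T.m_assoc)
  also have "\<dots> = x \<otimes>\<^bsub>T\<^esub> (c [^]\<^bsub>T\<^esub> (int k * lam x) \<otimes>\<^bsub>T\<^esub> y) \<otimes>\<^bsub>T\<^esub> c [^]\<^bsub>T\<^esub> (int k * lam y)"
    using y c_pow_central by simp
  also have "\<dots> = chi k x \<otimes>\<^bsub>T\<^esub> chi k y"
    using x y by (simp add: chi_def T.m_assoc)
  finally show "chi k (x \<otimes>\<^bsub>T\<^esub> y) = chi k x \<otimes>\<^bsub>T\<^esub> chi k y" .
qed

lemma phi_inj: "inj_on phi (carrier T)"
proof -
  have "coprime r (p * q)" using crp crq by simp
  then have "gcd r (p * q) = 1" by simp
  then obtain s k where sk: "r * s = p * q * k + 1"
    using bezout_nat[of r "p*q"] r1 by auto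
  define psi where "psi = Gfun T (a [^]\<^bsub>T\<^esub> s) (b [^]\<^bsub>T\<^esub> s)"
  have psi_hom: "psi \<in> hom T T"
    unfolding psi_def by (rule Gfun_hom) (auto simp: pow_rel)
  have psi_a: "psi a = a [^]\<^bsub>T\<^esub> s" and psi_b: "psi b = b [^]\<^bsub>T\<^esub> s"
    unfolding psi_def by (rule Gfun_alpha; auto simp: pow_rel)+
  interpret psih: group_hom T T psi by (simp add: group_hom_def group_hom_axioms_def psi_hom)
  have comp_hom: "psi \<circ> phi \<in> hom T T" using phi_hom psi_hom by (rule hom_compose)
  interpret th: group_hom T T "psi \<circ> phi" by (simp add: group_hom_def group_hom_axioms_def comp_hom)
  have ea: "(psi \<circ> phi) a = chi k a"
  proof -
    have "(psi \<circ> phi) a = a [^]\<^bsub>T\<^esub> (s * r)"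
      by (simp add: psih.hom_nat_pow psi_a T.nat_pow_pow)
    also have "s * r = 1 + p * (q * k)" using sk by (simp add: mult.commute mult.left_commute)
    also have "a [^]\<^bsub>T\<^esub> (1 + p * (q * k)) = a \<otimes>\<^bsub>T\<^esub> a [^]\<^bsub>T\<^esub> (p * (q * k))"
      using T.nat_pow_Suc2[of a "p * (q * k)"] by simp
    also have "\<dots> = a \<otimes>\<^bsub>T\<^esub> c [^]\<^bsub>T\<^esub> (q * k)"
      by (simp add: T.nat_pow_pow c_def)
    also have "\<dots> = chi k a"
      by (simp add: chi_def int_pow_int[symmetric] mult.commute)
    finally show ?thesis .
  qed
  have eb: "(psi \<circ> phi) b = chi k b"
  proof -
    have "(psi \<circ> phi) b = b [^]\<^bsub>T\<^esub> (s * r)"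
      by (simp add: psih.hom_nat_pow psi_b T.nat_pow_pow)
    also have "s * r = 1 + q * (p * k)" using sk by (simp add: mult.commute mult.left_commute)
    also have "b [^]\<^bsub>T\<^esub> (1 + q * (p * k)) = b \<otimes>\<^bsub>T\<^esub> b [^]\<^bsub>T\<^esub> (q * (p * k))"
      using T.nat_pow_Suc2[of b "q * (p * k)"] by simp
    also have "\<dots> = b \<otimes>\<^bsub>T\<^esub> c [^]\<^bsub>T\<^esub> (p * k)"
      by (simp add: T.nat_pow_pow c_b)
    also have "\<dots> = chi k b"
      by (simp add: chi_def int_pow_int[symmetric] mult.commute)
    finally show ?thesis .
  qed
  have eqchi: "(psi \<circ> phi) g = chi k g" if "g \<in> carrier T" for g
  proof -
    have "\<And>s. s \<in> {a,b} \<Longrightarrow> (psi \<circ> phi) s = chi k s" using ea eb by blast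
    then show ?thesis using th.hom_eq_on_generate[OF chi_hom[of k], of "{a,b}" g] that gen_ab by auto
  qed
  show ?thesis
  proof (subst phih.inj_on_one_iff, intro allI impI)
    fix g assume g: "g \<in> carrier T" and "phi g = \<one>\<^bsub>T\<^esub>"
    then have "chi k g = \<one>\<^bsub>T\<^esub>" using eqchi[OF g] by simp
    then have "lam (chi k g) = 0" by simp
    then have "lam g * (1 + int k * int p * int q) = 0"
      using g by (simp add: chi_def lam_ipow algebra_simps)
    moreover have "1 + int k * int p * int q \<noteq> 0"
      by (smt (verit) mult_nonneg_nonneg of_nat_0_le_iff)
    ultimately have l0: "lam g = 0" by simp
    then show "g = \<one>\<^bsub>T\<^esub>" using \<open>chi k g = \<one>\<^bsub>T\<^esub>\<close> g by (simp add: chi_def)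
  qed
qed

lemma phi_iso: "phi \<in> iso T (T\<lparr>carrier := Gr\<rparr>)"
proof -
  have "phi \<in> hom T (T\<lparr>carrier := Gr\<rparr>)"
    by (rule homI) (use phi_image in auto)
  moreover have "bij_betw phi (carrier T) Gr"
    using phi_inj phi_image by (simp add: bij_betw_def)
  ultimately show ?thesis by (simp add: iso_def)
qed

end


type_synonym syl = "bool \<times> nat"

definition md :: "nat \<Rightarrow> nat \<Rightarrow> bool \<Rightarrow> nat" where
  "md p q f = (if f then q else p)"

definition gl :: "bool \<Rightarrow> gen" where "gl f = (if f then Beta else Alpha)"
definition gf :: "gen \<Rightarrow> bool" where "gf g = (g = Beta)"

lemma gf_gl[simp]: "gf (gl f) = f" by (simp add: gf_def gl_def)
lemma gl_gf[simp]: "gl (gf g) = g" by (cases g) (simp_all add: gf_def gl_def)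

fun red :: "nat \<Rightarrow> nat \<Rightarrow> syl list \<Rightarrow> bool" where
  "red p q [] = True"
| "red p q (x # w) = (0 < snd x \<and> snd x < md p q (fst x) \<and> red p q w \<and> (w = [] \<or> fst (hd w) \<noteq> fst x))"

definition nf :: "bool \<Rightarrow> syl list \<Rightarrow> bool" where
  "nf f w = (w = [] \<or> fst (hd w) \<noteq> f)"

fun step :: "nat \<Rightarrow> nat \<Rightarrow> bool \<Rightarrow> syl list \<Rightarrow> syl list" where
  "step p q f [] = [(f, 1)]"
| "step p q f ((g, i) # w) = (if g = f then (if Suc i = md p q f then w else (g, Suc i) # w) else (f, 1) # (g, i) # w)"

fun act :: "nat \<Rightarrow> nat \<Rightarrow> letter list \<Rightarrow> syl list \<Rightarrow> syl list" where
  "act p q [] v = v"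
| "act p q (l # u) v = (if snd l then (step p q (gf (fst l)) ^^ (md p q (gf (fst l)) - 1)) else step p q (gf (fst l))) (act p q u v)"

fun sw :: "syl list \<Rightarrow> letter list" where
  "sw [] = []"
| "sw (x # w) = replicate (snd x) (gl (fst x), False) @ sw w"

lemma act_append: "act p q (u @ u') v = act p q u (act p q u' v)"
  by (induction u) auto

lemma act_rep: "act p q (replicate n (g, False)) v = (step p q (gf g) ^^ n) v"
  by (induction n) auto

context tg begin

lemma md2: "md p q f \<ge> 2" using p2 q2 by (simp add: md_def)

lemma step_pow_nf:
  assumes "nf f w" "0 < k" "k < md p q f"
  shows "(step p q f ^^ k) w = (f, k) # w"
  using assms(2,3)
proof (induction k)
  case 0 then show ?case by simp
next
  case (Suc k)
  show ?case
  proof (cases "k = 0")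
    case True
    then show ?thesis using assms(1) by (cases w) (auto simp: nf_def)
  next
    case False
    then have "(step p q f ^^ k) w = (f, k) # w" using Suc by simp
    then show ?thesis using Suc by simp
  qed
qed

lemma step_pow_md_nf:
  assumes "nf f w"
  shows "(step p q f ^^ md p q f) w = w"
proof -
  have m: "md p q f = Suc (md p q f - 1)" using md2[of f] by simp
  have "(step p q f ^^ (md p q f - 1)) w = (f, md p q f - 1) # w"
    using step_pow_nf[OF assms] md2[of f] by simp
  then have "(step p q f ^^ Suc (md p q f - 1)) w = step p q f ((f, md p q f - 1) # w)"
    by simp
  also have "\<dots> = w" using m by simp
  finally show ?thesis using m by metis
qed

lemma red_tl_nf: "red p q ((f, i) # w) \<Longrightarrow> nf f w \<and> red p q w \<and> 0 < i \<and> i < md p q f"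
  by (auto simp: nf_def)

lemma step_pow_md:
  assumes "red p q w"
  shows "(step p q f ^^ md p q f) w = w"
proof (cases "nf f w")
  case True then show ?thesis by (rule step_pow_md_nf)
next
  case False
  then obtain i w' where w: "w = (f, i) # w'" by (cases w) (auto simp: nf_def)
  then have h: "nf f w'" "0 < i" "i < md p q f" using red_tl_nf assms by blast+
  have wi: "w = (step p q f ^^ i) w'" using step_pow_nf[OF h] w by simp
  have "(step p q f ^^ md p q f) w = (step p q f ^^ (md p q f + i)) w'"
    by (simp add: wi funpow_add)
  also have "\<dots> = (step p q f ^^ i) ((step p q f ^^ md p q f) w')"
    by (simp add: funpow_add add.commute)
  also have "\<dots> = w" using step_pow_md_nf[OF h(1)] wi by simp
  finally show ?thesis .
qed

lemma red_step: "red p q w \<Longrightarrow> red p q (step p q f w)"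
proof (cases w)
  case Nil then show ?thesis using md2[of f] by simp
next
  case (Cons x w')
  assume r: "red p q w"
  obtain g i where x: "x = (g, i)" by (cases x)
  show ?thesis using r md2[of f] unfolding Cons x
    by (cases w') (auto simp: nf_def)
qed

lemma red_step_pow: "red p q w \<Longrightarrow> red p q ((step p q f ^^ n) w)"
  by (induction n) (auto simp: red_step)

lemma red_act: "red p q v \<Longrightarrow> red p q (act p q u v)"
  by (induction u) (auto simp: red_step red_step_pow)

lemma act_word_eq:
  "word_eq p q u u' \<Longrightarrow> red p q v \<Longrightarrow> act p q u v = act p q u' v"
proof (induction arbitrary: v rule: word_eq.induct)
  case (cancel u x w)
  obtain g s where x: "x = (g, s)" by (cases x)
  let ?f = "gf g"
  have r: "red p q (act p q w v)" using cancel red_act by blast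
  have m: "md p q ?f = Suc (md p q ?f - 1)" using md2[of ?f] by simp
  have "act p q ([x, letter_inv x] @ w) v = act p q w v"
  proof (cases s)
    case True
    have "(step p q ?f ^^ (md p q ?f - 1)) (step p q ?f (act p q w v)) = (step p q ?f ^^ Suc (md p q ?f - 1)) (act p q w v)"
      by (simp only: funpow_Suc_right comp_def)
    also have "\<dots> = act p q w v" using m step_pow_md[OF r] by metis
    finally show ?thesis using True by (simp add: x letter_inv_def)
  next
    case False
    have "step p q ?f ((step p q ?f ^^ (md p q ?f - 1)) (act p q w v)) = (step p q ?f ^^ Suc (md p q ?f - 1)) (act p q w v)"
      by simp
    also have "\<dots> = act p q w v" using m step_pow_md[OF r] by metis
    finally show ?thesis using False by (simp add: x letter_inv_def)
  qed
  then show ?case by (simp add: act_append)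
next
  case (rel u w)
  have r: "red p q (act p q w v)" using rel red_act by blast
  have "act p q (replicate p (Alpha, False) @ w) v = act p q (replicate q (Beta, False) @ w) v"
    using step_pow_md[OF r, of False] step_pow_md[OF r, of True]
    by (simp add: act_append act_rep gf_def md_def)
  then show ?case by (simp add: act_append)
next
  case (sym u v') then show ?case by simp
next
  case (trans u v' w) then show ?case by simp
qed simp

lemma act_sw: "red p q (w @ v) \<Longrightarrow> act p q (sw w) v = w @ v"
proof (induction w)
  case Nil then show ?case by simp
next
  case (Cons x w)
  obtain f i where x: "x = (f, i)" by (cases x)
  have h: "nf f (w @ v)" "red p q (w @ v)" "0 < i" "i < md p q f"
    using red_tl_nf[of f i "w @ v"] Cons.prems x by auto
  have "act p q (sw (x # w)) v = (step p q f ^^ i) (w @ v)"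
    using Cons.IH[OF h(2)] by (simp add: x act_append act_rep)
  also have "\<dots> = x # w @ v" using step_pow_nf[OF h(1) h(3) h(4)] x by simp
  finally show ?case by simp
qed

lemma red_snoc:
  "red p q w \<Longrightarrow> w \<noteq> [] \<Longrightarrow> fst (last w) \<noteq> f \<Longrightarrow> 0 < i \<Longrightarrow> i < md p q f \<Longrightarrow> red p q (w @ [(f, i)])"
proof (induction w)
  case Nil then show ?case by simp
next
  case (Cons x w)
  show ?case
  proof (cases "w = []")
    case True then show ?thesis using Cons.prems by auto
  next
    case False then show ?thesis using Cons by auto
  qed
qed

definition E where "E w = word_class p q (sw w)"

lemma E_in[simp]: "E w \<in> carrier T" by (simp add: E_def)

lemma cls_md: "word_class p q (replicate (md p q f) (gl f, False)) = c"
proof (cases f)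
  case True then show ?thesis by (simp add: cls_rep md_def gl_def c_b)
next
  case False then show ?thesis by (simp add: cls_rep md_def gl_def c_def)
qed

definition PP where
  "PP x \<longleftrightarrow> (\<forall>w. red p q w \<longrightarrow> (\<exists>(d::int) w'. red p q w' \<and> x \<otimes>\<^bsub>T\<^esub> E w = c [^]\<^bsub>T\<^esub> d \<otimes>\<^bsub>T\<^esub> E w'))"

lemma PP_mult:
  assumes "x \<in> carrier T" "y \<in> carrier T" "PP x" "PP y"
  shows "PP (x \<otimes>\<^bsub>T\<^esub> y)"
  unfolding PP_def
proof (intro allI impI)
  fix w assume "red p q w"
  then obtain d :: int and w' where 1: "red p q w'" "y \<otimes>\<^bsub>T\<^esub> E w = c [^]\<^bsub>T\<^esub> d \<otimes>\<^bsub>T\<^esub> E w'"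
    using assms(4) unfolding PP_def by blast
  then obtain d' :: int and w'' where 2: "red p q w''" "x \<otimes>\<^bsub>T\<^esub> E w' = c [^]\<^bsub>T\<^esub> d' \<otimes>\<^bsub>T\<^esub> E w''"
    using assms(3) unfolding PP_def by blast
  have "x \<otimes>\<^bsub>T\<^esub> y \<otimes>\<^bsub>T\<^esub> E w = x \<otimes>\<^bsub>T\<^esub> (c [^]\<^bsub>T\<^esub> d \<otimes>\<^bsub>T\<^esub> E w')"
    using assms 1 by (simp add: T.m_assoc)
  also have "\<dots> = c [^]\<^bsub>T\<^esub> d \<otimes>\<^bsub>T\<^esub> (x \<otimes>\<^bsub>T\<^esub> E w')"
    using assms c_pow_central[of x d] by (simp add: T.m_assoc[symmetric])
  also have "\<dots> = c [^]\<^bsub>T\<^esub> (d + d') \<otimes>\<^bsub>T\<^esub> E w''"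
    using 2 by (simp add: T.int_pow_mult T.m_assoc)
  finally show "\<exists>(d::int) w'. red p q w' \<and> x \<otimes>\<^bsub>T\<^esub> y \<otimes>\<^bsub>T\<^esub> E w = c [^]\<^bsub>T\<^esub> d \<otimes>\<^bsub>T\<^esub> E w'"
    using 2 by blast
qed

lemma PP_one: "PP \<one>\<^bsub>T\<^esub>"
  unfolding PP_def by (metis E_in int_pow_0 T.l_one)

lemma PP_c: "PP (c [^]\<^bsub>T\<^esub> (m::int))"
  unfolding PP_def by (metis E_in T.int_pow_mult c_in T.m_assoc T.int_pow_closed)

lemma PP_letter: "PP (word_class p q [(g, False)])"
  unfolding PP_def
proof (intro allI impI)
  fix w assume rw: "red p q w"
  let ?f = "gf g"
  let ?X = "word_class p q [(g, False)]"
  show "\<exists>(d::int) w'. red p q w' \<and> ?X \<otimes>\<^bsub>T\<^esub> E w = c [^]\<^bsub>T\<^esub> d \<otimes>\<^bsub>T\<^esub> E w'"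
  proof (cases "nf ?f w")
    case True
    have "red p q ((?f, 1) # w)" using True rw md2[of ?f] by (auto simp: nf_def)
    moreover have "?X \<otimes>\<^bsub>T\<^esub> E w = c [^]\<^bsub>T\<^esub> (0::int) \<otimes>\<^bsub>T\<^esub> E ((?f, 1) # w)"
      by (simp add: E_def Gt_mult)
    ultimately show ?thesis by blast
  next
    case False
    then obtain i w' where w: "w = (?f, i) # w'" by (cases w) (auto simp: nf_def)
    then have h: "nf ?f w'" "red p q w'" "0 < i" "i < md p q ?f" using red_tl_nf rw by blast+
    have e: "?X \<otimes>\<^bsub>T\<^esub> E w = word_class p q (replicate (Suc i) (g, False) @ sw w')"
      by (simp add: E_def Gt_mult w)
    show ?thesis
    proof (cases "Suc i = md p q ?f")
      case True
      have "?X \<otimes>\<^bsub>T\<^esub> E w = c [^]\<^bsub>T\<^esub> (1::int) \<otimes>\<^bsub>T\<^esub> E w'"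
        using e cls_md[of ?f] True by (simp add: cls_append E_def)
      then show ?thesis using h by blast
    next
      case False
      have "red p q ((?f, Suc i) # w')" using h False by (auto simp: nf_def)
      moreover have "?X \<otimes>\<^bsub>T\<^esub> E w = c [^]\<^bsub>T\<^esub> (0::int) \<otimes>\<^bsub>T\<^esub> E ((?f, Suc i) # w')"
        using e by (simp add: E_def)
      ultimately show ?thesis by blast
    qed
  qed
qed

lemma PP_pow: "x \<in> carrier T \<Longrightarrow> PP x \<Longrightarrow> PP (x [^]\<^bsub>T\<^esub> (n::nat))"
  by (induction n) (auto simp: PP_one PP_mult)

lemma PP_inv_letter: "PP (word_class p q [(g, True)])"
proof -
  let ?f = "gf g"
  let ?X = "word_class p q [(g, False)]"
  have X: "?X [^]\<^bsub>T\<^esub> md p q ?f = c"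
    using cls_md[of ?f] cls_rep[of "md p q ?f" g] by (cases g) (auto simp: galpha_def gbeta_def)
  have m: "md p q ?f = Suc (md p q ?f - 1)" using md2[of ?f] by simp
  have "?X [^]\<^bsub>T\<^esub> (md p q ?f - 1) \<otimes>\<^bsub>T\<^esub> ?X = c"
    using X m by (metis T.nat_pow_Suc)
  then have "inv\<^bsub>T\<^esub> ?X = inv\<^bsub>T\<^esub> c \<otimes>\<^bsub>T\<^esub> ?X [^]\<^bsub>T\<^esub> (md p q ?f - 1)"
    by (metis T.inv_mult_group T.inv_inv T.nat_pow_closed T.m_assoc T.r_inv T.r_one T.inv_closed cls_in)
  then have "word_class p q [(g, True)] = c [^]\<^bsub>T\<^esub> (-1::int) \<otimes>\<^bsub>T\<^esub> ?X [^]\<^bsub>T\<^esub> (md p q ?f - 1)"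
    by (simp add: cls_inv_letter T.int_pow_neg)
  then show ?thesis
    using PP_mult[OF _ _ PP_c PP_pow[OF _ PP_letter]] by simp
qed

lemma normal_form: "\<exists>(m::int) w. red p q w \<and> word_class p q u = c [^]\<^bsub>T\<^esub> m \<otimes>\<^bsub>T\<^esub> E w"
proof -
  have "PP (word_class p q u)"
  proof (induction u)
    case Nil then show ?case using PP_one by (simp add: cls_Nil)
  next
    case (Cons l u)
    obtain g s where l: "l = (g, s)" by (cases l)
    have "PP (word_class p q [l])" using PP_letter PP_inv_letter by (cases s) (auto simp: l)
    then show ?case using Cons PP_mult cls_Cons[of l u] by (metis cls_in)
  qed
  then have "\<exists>(m::int) w. red p q w \<and> word_class p q u \<otimes>\<^bsub>T\<^esub> E [] = c [^]\<^bsub>T\<^esub> m \<otimes>\<^bsub>T\<^esub> E w"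
    unfolding PP_def by (metis red.simps(1))
  then obtain m :: int and w where "red p q w" "word_class p q u \<otimes>\<^bsub>T\<^esub> E [] = c [^]\<^bsub>T\<^esub> m \<otimes>\<^bsub>T\<^esub> E w"
    by blast
  then show ?thesis by (auto simp: E_def cls_Nil)
qed

lemma E_not_central:
  assumes "red p q w" "w \<noteq> []"
  shows "\<exists>y \<in> carrier T. E w \<otimes>\<^bsub>T\<^esub> y \<noteq> y \<otimes>\<^bsub>T\<^esub> E w"
proof (rule ccontr)
  assume "\<not> ?thesis"
  then have cen: "\<And>y. y \<in> carrier T \<Longrightarrow> E w \<otimes>\<^bsub>T\<^esub> y = y \<otimes>\<^bsub>T\<^esub> E w" by blast
  define f where "f = (\<not> fst (last w))"
  define v where "v = [(f, 1::nat)]"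
  have rv: "red p q v" using md2[of f] by (simp add: v_def)
  have rwv: "red p q (w @ v)" unfolding v_def using red_snoc[OF assms, of f 1] md2[of f] f_def by simp
  have "E w \<otimes>\<^bsub>T\<^esub> E v = E v \<otimes>\<^bsub>T\<^esub> E w" using cen by simp
  then have "word_eq p q (sw w @ sw v) (sw v @ sw w)"
    by (simp add: E_def Gt_mult word_class_eq_iff)
  then have "act p q (sw w @ sw v) [] = act p q (sw v @ sw w) []"
    by (rule act_word_eq) simp
  moreover have "act p q (sw w @ sw v) [] = w @ v"
    using act_sw[of v "[]"] act_sw[OF rwv] rv by (simp add: act_append)
  moreover have "act p q (sw v @ sw w) [] = step p q f w"
    using act_sw[of w "[]"] assms by (simp add: act_append v_def)
  ultimately have eq: "w @ v = step p q f w" by simp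
  obtain g i w' where w: "w = (g, i) # w'" using assms(2) by (cases w) auto
  show False
  proof (cases "g = f")
    case True
    have "length (step p q f w) \<le> length w" using True by (simp add: w)
    moreover have "length (w @ v) = length (step p q f w)" using eq by simp
    ultimately show False by (simp add: v_def)
  next
    case False
    then have "step p q f w = (f, 1) # w" by (simp add: w)
    then show False using eq False by (simp add: w)
  qed
qed

lemma center_T: "center T = range (\<lambda>m::int. c [^]\<^bsub>T\<^esub> m)"
proof
  show "range (\<lambda>m::int. c [^]\<^bsub>T\<^esub> m) \<subseteq> center T"
    using c_pow_central by (auto simp: center_def)
next
  show "center T \<subseteq> range (\<lambda>m::int. c [^]\<^bsub>T\<^esub> m)"
  proof
    fix g assume g: "g \<in> center T"
    then obtain u where u: "g = word_class p q u" by (auto simp: center_def Gt_carrier)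
    obtain m :: int and w where mw: "red p q w" "word_class p q u = c [^]\<^bsub>T\<^esub> m \<otimes>\<^bsub>T\<^esub> E w"
      using normal_form by blast
    show "g \<in> range (\<lambda>m::int. c [^]\<^bsub>T\<^esub> m)"
    proof (cases "w = []")
      case True then show ?thesis using mw u by (simp add: E_def cls_Nil)
    next
      case False
      have Ew: "E w = inv\<^bsub>T\<^esub> (c [^]\<^bsub>T\<^esub> m) \<otimes>\<^bsub>T\<^esub> g"
        using mw u by (simp add: T.m_assoc[symmetric])
      have gc: "\<And>y. y \<in> carrier T \<Longrightarrow> g \<otimes>\<^bsub>T\<^esub> y = y \<otimes>\<^bsub>T\<^esub> g" using g by (auto simp: center_def)
      have "E w \<otimes>\<^bsub>T\<^esub> y = y \<otimes>\<^bsub>T\<^esub> E w" if y: "y \<in> carrier T" for y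
      proof -
        have ci: "inv\<^bsub>T\<^esub> (c [^]\<^bsub>T\<^esub> m) = c [^]\<^bsub>T\<^esub> (-m)" by (simp add: T.int_pow_neg)
        have gin: "g \<in> carrier T" using g by (auto simp: center_def)
        show ?thesis unfolding Ew ci
          using c_pow_central[OF y, of "-m"] gc[OF y] y gin
          by (metis T.int_pow_closed T.m_assoc c_in)
      qed
      then show ?thesis using E_not_central[OF mw(1) False] by blast
    qed
  qed
qed

end


context group begin

lemma invx_cancel1: "x \<in> carrier G \<Longrightarrow> y \<in> carrier G \<Longrightarrow> inv x \<otimes> (x \<otimes> y) = y"
  by (simp add: m_assoc[symmetric])
lemma invx_cancel2: "x \<in> carrier G \<Longrightarrow> y \<in> carrier G \<Longrightarrow> x \<otimes> (inv x \<otimes> y) = y"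
  by (simp add: m_assoc[symmetric])

lemma central_swap:
  assumes "z \<in> carrier G" "g \<in> carrier G" "R \<in> carrier G" "z \<otimes> g = g \<otimes> z"
  shows "z \<otimes> (g \<otimes> R) = g \<otimes> (z \<otimes> R)"
  using assms by (metis m_assoc)

lemma comm_central:
  assumes x: "x \<in> carrier G" and y: "y \<in> carrier G" and z1: "z1 \<in> carrier G" and z2: "z2 \<in> carrier G"
    and c1: "\<And>g. g \<in> carrier G \<Longrightarrow> z1 \<otimes> g = g \<otimes> z1"
    and c2: "\<And>g. g \<in> carrier G \<Longrightarrow> z2 \<otimes> g = g \<otimes> z2"
  shows "(x \<otimes> z1) \<otimes> (y \<otimes> z2) \<otimes> inv (x \<otimes> z1) \<otimes> inv (y \<otimes> z2) = x \<otimes> y \<otimes> inv x \<otimes> inv y"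
proof -
  have i1: "inv z1 \<otimes> g = g \<otimes> inv z1" if g: "g \<in> carrier G" for g
  proof -
    have "inv z1 \<otimes> g = inv z1 \<otimes> g \<otimes> (z1 \<otimes> inv z1)" using g z1 by simp
    also have "\<dots> = inv z1 \<otimes> (g \<otimes> z1) \<otimes> inv z1" using g z1 by (simp only: m_assoc inv_closed m_closed)
    also have "\<dots> = inv z1 \<otimes> (z1 \<otimes> g) \<otimes> inv z1" using c1[OF g] by simp
    also have "\<dots> = g \<otimes> inv z1" using g z1 by (simp add: m_assoc[symmetric])
    finally show ?thesis .
  qed
  have "(x \<otimes> z1) \<otimes> (y \<otimes> z2) \<otimes> inv (x \<otimes> z1) \<otimes> inv (y \<otimes> z2)
     = x \<otimes> (z1 \<otimes> (y \<otimes> (z2 \<otimes> (inv z1 \<otimes> (inv x \<otimes> (inv z2 \<otimes> inv y))))))"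
    using x y z1 z2 inv_mult_group[OF x z1] inv_mult_group[OF y z2] by (simp only: m_assoc m_closed inv_closed)
  also have "z2 \<otimes> (inv z1 \<otimes> (inv x \<otimes> (inv z2 \<otimes> inv y))) = inv z1 \<otimes> (z2 \<otimes> (inv x \<otimes> (inv z2 \<otimes> inv y)))"
    using x y z1 z2 i1[of z2] by (intro central_swap[symmetric]) auto
  also have "y \<otimes> (inv z1 \<otimes> (z2 \<otimes> (inv x \<otimes> (inv z2 \<otimes> inv y)))) = inv z1 \<otimes> (y \<otimes> (z2 \<otimes> (inv x \<otimes> (inv z2 \<otimes> inv y))))"
    using x y z1 z2 i1[of y] by (intro central_swap[symmetric]) auto
  also have "z1 \<otimes> (inv z1 \<otimes> (y \<otimes> (z2 \<otimes> (inv x \<otimes> (inv z2 \<otimes> inv y))))) = y \<otimes> (z2 \<otimes> (inv x \<otimes> (inv z2 \<otimes> inv y)))"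
    using x y z1 z2 by (simp add: m_assoc[symmetric])
  also have "z2 \<otimes> (inv x \<otimes> (inv z2 \<otimes> inv y)) = inv x \<otimes> (z2 \<otimes> (inv z2 \<otimes> inv y))"
    using x y z1 z2 c2[of "inv x"] by (intro central_swap) auto
  also have "z2 \<otimes> (inv z2 \<otimes> inv y) = inv y"
    using x y z1 z2 by (simp add: m_assoc[symmetric])
  finally show ?thesis using x y z1 z2 by (simp add: m_assoc)
qed

lemma pq_trivial:
  fixes p q :: nat and p1 q1 :: int
  assumes A: "A \<in> carrier G" and B: "B \<in> carrier G" and rel: "A [^] p = B [^] q"
    and bez: "int p * p1 + int q * q1 = 1" and x: "A [^] q1 \<otimes> B [^] p1 = \<one>"
  shows "A = \<one> \<and> B = \<one>"
proof -
  have relI: "A [^] (int p) = B [^] (int q)" using rel by (simp add: int_pow_int)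
  have i1: "inv (B [^] p1) = A [^] q1" using x A B by (intro inv_equality) auto
  have e1: "A [^] q1 = B [^] (- p1)" using i1 B by (simp add: int_pow_neg)
  have e2: "B [^] p1 = A [^] (- q1)" using i1 A B by (metis int_pow_closed int_pow_neg inv_inv)
  have "A = A [^] (q1 * int q + int p * p1)" using bez A by (simp add: algebra_simps)
  also have "\<dots> = (A [^] q1) [^] (int q) \<otimes> (A [^] (int p)) [^] p1"
    using A by (simp add: int_pow_mult int_pow_pow)
  also have "\<dots> = B [^] (- p1 * int q) \<otimes> B [^] (int q * p1)"
    using B by (simp add: e1 relI int_pow_pow)
  also have "\<dots> = B [^] (- p1 * int q + int q * p1)"
    using B by (simp only: int_pow_mult)
  also have "\<dots> = \<one>" by simp
  finally have a1: "A = \<one>" .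
  have "B = B [^] (int q * q1 + p1 * int p)" using bez B by (simp add: algebra_simps)
  also have "\<dots> = (B [^] (int q)) [^] q1 \<otimes> (B [^] p1) [^] (int p)"
    using B by (simp add: int_pow_mult int_pow_pow)
  also have "\<dots> = A [^] (int p * q1) \<otimes> A [^] (- q1 * int p)"
    using A by (simp add: e2 relI[symmetric] int_pow_pow)
  also have "\<dots> = A [^] (int p * q1 + - q1 * int p)"
    using A by (simp only: int_pow_mult)
  also have "\<dots> = \<one>" by simp
  finally show ?thesis using a1 by simp
qed

lemma normal_closure_normal:
  assumes "S \<subseteq> carrier G"
  shows "normal_closure G S \<lhd> G"
proof -
  let ?S = "\<Union>g \<in> carrier G. (\<lambda>s. g \<otimes> s \<otimes> inv g) ` S"
  have Sc: "?S \<subseteq> carrier G" using assms by auto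
  have mem: "g \<otimes> s \<otimes> inv g \<in> ?S" if "g \<in> carrier G" "s \<in> S" for g s
    using that by blast
  have cj: "x \<otimes> h \<otimes> inv x \<in> ?S" if x: "x \<in> carrier G" and h: "h \<in> ?S" for x h
  proof -
    obtain g s where gs: "g \<in> carrier G" "s \<in> S" "h = g \<otimes> s \<otimes> inv g" using h by blast
    have sc: "s \<in> carrier G" using gs assms by blast
    have "x \<otimes> h \<otimes> inv x = (x \<otimes> g) \<otimes> s \<otimes> inv (x \<otimes> g)"
      using gs(1,3) x sc inv_mult_group[OF x gs(1)] by (simp only: m_assoc m_closed inv_closed)
    then show ?thesis using mem[of "x \<otimes> g" s] gs x by simp
  qed
  have conj: "x \<otimes> h \<otimes> inv x \<in> generate G ?S" if x: "x \<in> carrier G" and h: "h \<in> generate G ?S" for x h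
    using h
  proof (induction rule: generate.induct)
    case one then show ?case using x by (simp add: generate.one)
  next
    case (incl h)
    then have "x \<otimes> h \<otimes> inv x \<in> ?S" by (rule cj[OF x])
    then show ?case by (rule generate.incl)
  next
    case (inv h)
    have hc: "h \<in> carrier G" using inv Sc by blast
    have "x \<otimes> inv h \<otimes> inv x = inv (x \<otimes> h \<otimes> inv x)"
      using hc x inv_mult_group[OF x hc] inv_mult_group[OF m_closed[OF x hc] inv_closed[OF x]]
      by (simp add: m_assoc)
    moreover have "x \<otimes> h \<otimes> inv x \<in> ?S" using inv by (rule cj[OF x])
    then have "inv (x \<otimes> h \<otimes> inv x) \<in> generate G ?S" by (rule generate.inv)
    ultimately show ?case by simp
  next
    case (eng h1 h2)
    have c: "h1 \<in> carrier G" "h2 \<in> carrier G" using eng generate_in_carrier Sc by blast+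
    have "x \<otimes> (h1 \<otimes> h2) \<otimes> inv x = (x \<otimes> h1 \<otimes> inv x) \<otimes> (x \<otimes> h2 \<otimes> inv x)"
      using c x by (simp add: m_assoc invx_cancel1)
    then show ?case using generate.eng[OF eng.IH] by simp
  qed
  have "subgroup (generate G ?S) G" by (rule generate_is_subgroup[OF Sc])
  then show ?thesis unfolding normal_closure_def normal_inv_iff using conj by blast
qed

lemma in_normal_closure:
  assumes "s \<in> S" "s \<in> carrier G" shows "s \<in> normal_closure G S"
proof -
  have "s \<in> (\<lambda>x. \<one> \<otimes> x \<otimes> inv \<one>) ` S" by (rule image_eqI[of _ _ s]) (use assms in simp_all)
  then have "s \<in> (\<Union>g \<in> carrier G. (\<lambda>x. g \<otimes> x \<otimes> inv g) ` S)" by blast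
  then show ?thesis unfolding normal_closure_def by (rule generate.incl)
qed

lemma normal_closure_sub:
  assumes "N \<lhd> G" "S \<subseteq> N"
  shows "normal_closure G S \<subseteq> N"
  unfolding normal_closure_def
proof (rule generate_subgroup_incl)
  show "subgroup N G" using assms normal_imp_subgroup by blast
  show "(\<Union>g\<in>carrier G. (\<lambda>s. g \<otimes> s \<otimes> inv g) ` S) \<subseteq> N"
    using assms normal_inv_iff by blast
qed

lemma rcos_eq_self: "subgroup H G \<Longrightarrow> x \<in> carrier G \<Longrightarrow> H #> x = H \<Longrightarrow> x \<in> H"
  using rcos_self by metis

lemma pq_normal:
  fixes p q :: nat and p1 q1 :: int
  assumes N: "N \<lhd> G" and A: "A \<in> carrier G" and B: "B \<in> carrier G" and rel: "A [^] p = B [^] q"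
    and bez: "int p * p1 + int q * q1 = 1" and x: "A [^] q1 \<otimes> B [^] p1 \<in> N"
  shows "A \<in> N \<and> B \<in> N"
proof -
  interpret N: normal N G by (rule N)
  have Q: "group (G Mod N)" by (rule N.factorgroup_is_group)
  have hom: "(\<lambda>a. N #> a) \<in> hom G (G Mod N)" by (rule N.r_coset_hom_Mod)
  interpret h: group_hom G "G Mod N" "\<lambda>a. N #> a"
    using Q hom by (simp add: group_hom_def group_hom_axioms_def is_group)
  have "N #> (A [^] q1 \<otimes> B [^] p1) = N" using x N.rcos_const is_group by blast
  then have 1: "(N #> A) [^]\<^bsub>G Mod N\<^esub> q1 \<otimes>\<^bsub>G Mod N\<^esub> (N #> B) [^]\<^bsub>G Mod N\<^esub> p1 = \<one>\<^bsub>G Mod N\<^esub>"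
    using A B by (simp add: h.hom_int_pow[symmetric])
  have 2: "(N #> A) [^]\<^bsub>G Mod N\<^esub> p = (N #> B) [^]\<^bsub>G Mod N\<^esub> q"
    using A B rel by (simp add: h.hom_nat_pow[symmetric])
  have "N #> A = N \<and> N #> B = N"
    using group.pq_trivial[OF Q _ _ 2 bez 1] A B by simp
  then show ?thesis using rcos_eq_self N.subgroup_axioms A B by blast
qed

end


lemma (in group) conj_central:
  assumes y: "y \<in> carrier G" and z: "z \<in> carrier G" and h: "h \<in> carrier G"
    and cz: "\<And>g. g \<in> carrier G \<Longrightarrow> z \<otimes> g = g \<otimes> z"
  shows "(y \<otimes> z) \<otimes> h \<otimes> inv (y \<otimes> z) = y \<otimes> h \<otimes> inv y"
proof -
  have "(y \<otimes> z) \<otimes> h \<otimes> inv (y \<otimes> z) = y \<otimes> (z \<otimes> (h \<otimes> (inv z \<otimes> inv y)))"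
    using y z h inv_mult_group[OF y z] by (simp only: m_assoc m_closed inv_closed)
  also have "z \<otimes> (h \<otimes> (inv z \<otimes> inv y)) = h \<otimes> (z \<otimes> (inv z \<otimes> inv y))"
    using y z h cz[OF h] by (intro central_swap) auto
  also have "z \<otimes> (inv z \<otimes> inv y) = inv y" using y z by (simp add: invx_cancel2)
  finally show ?thesis using y h by (simp add: m_assoc)
qed

lemma int_gcd1: "coprime (r::nat) p \<Longrightarrow> \<exists>u v. u * int r + v * int p = 1"
  using bezout_int[of "int r" "int p"] by (metis coprime_int_iff coprime_iff_gcd_eq_1)

context tgr begin

abbreviation "Grs \<equiv> T\<lparr>carrier := Gr\<rparr>"
abbreviation "D \<equiv> derived T (carrier T)"

lemma Gr_sub: "Gr \<subseteq> carrier T" using Gr_subgroup subgroup.subset by blast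
lemma ar_Gr: "ar \<in> Gr" and br_Gr: "br \<in> Gr" by (auto intro: generate.incl)
lemma Grs_group: "group Grs" using T.subgroup_imp_group[OF Gr_subgroup] .

lemma Gr_pow: "x \<in> Gr \<Longrightarrow> x [^]\<^bsub>T\<^esub> (k::int) \<in> Gr"
  using T.subgroup_int_pow_closed[OF Gr_subgroup] by blast

lemma crk_Gr: "c [^]\<^bsub>T\<^esub> (int r * k) \<in> Gr"
proof -
  have "c [^]\<^bsub>T\<^esub> (int r * k) = (c [^]\<^bsub>T\<^esub> (int r)) [^]\<^bsub>T\<^esub> k" by (simp add: T.int_pow_pow)
  also have "\<dots> = (ar [^]\<^bsub>T\<^esub> p) [^]\<^bsub>T\<^esub> k" by (simp add: int_pow_int pow_rel)
  also have "\<dots> = ar [^]\<^bsub>T\<^esub> (int p * k)" by (simp add: T.int_pow_pow int_pow_int[symmetric] mult.assoc)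
  finally show ?thesis using Gr_pow[OF ar_Gr] by simp
qed

lemma decomp: "g \<in> carrier T \<Longrightarrow> \<exists>x\<in>Gr. \<exists>m::int. g = x \<otimes>\<^bsub>T\<^esub> c [^]\<^bsub>T\<^esub> m"
proof -
  let ?S = "{g \<in> carrier T. \<exists>x\<in>Gr. \<exists>m::int. g = x \<otimes>\<^bsub>T\<^esub> c [^]\<^bsub>T\<^esub> m}"
  have sub: "subgroup ?S T"
  proof (rule T.subgroupI)
    show "?S \<subseteq> carrier T" by blast
    have "\<one>\<^bsub>T\<^esub> \<in> ?S" using generate.one[of T "{ar,br}"] by (intro CollectI conjI bexI[of _ "\<one>\<^bsub>T\<^esub>"] exI[of _ 0]) simp_all
    then show "?S \<noteq> {}" by blast
  next
    fix g assume "g \<in> ?S"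
    then obtain x m where xm: "x \<in> Gr" "g = x \<otimes>\<^bsub>T\<^esub> c [^]\<^bsub>T\<^esub> (m::int)" by blast
    have x: "x \<in> carrier T" using xm Gr_sub by blast
    have "inv\<^bsub>T\<^esub> g = inv\<^bsub>T\<^esub> (c [^]\<^bsub>T\<^esub> m) \<otimes>\<^bsub>T\<^esub> inv\<^bsub>T\<^esub> x"
      using xm x by (simp add: T.inv_mult_group)
    also have "\<dots> = c [^]\<^bsub>T\<^esub> (- m) \<otimes>\<^bsub>T\<^esub> inv\<^bsub>T\<^esub> x" by (simp add: T.int_pow_neg)
    also have "\<dots> = inv\<^bsub>T\<^esub> x \<otimes>\<^bsub>T\<^esub> c [^]\<^bsub>T\<^esub> (- m)" using x c_pow_central by simp
    finally have "inv\<^bsub>T\<^esub> g = inv\<^bsub>T\<^esub> x \<otimes>\<^bsub>T\<^esub> c [^]\<^bsub>T\<^esub> (- m)" .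
    moreover have "inv\<^bsub>T\<^esub> x \<in> Gr" using xm(1) T.subgroupE(3)[OF Gr_subgroup] by blast
    moreover have "inv\<^bsub>T\<^esub> g \<in> carrier T" using \<open>g \<in> ?S\<close> by auto
    ultimately show "inv\<^bsub>T\<^esub> g \<in> ?S" by blast
  next
    fix g h assume "g \<in> ?S" "h \<in> ?S"
    then obtain x m y n where xm: "x \<in> Gr" "g = x \<otimes>\<^bsub>T\<^esub> c [^]\<^bsub>T\<^esub> (m::int)"
      and yn: "y \<in> Gr" "h = y \<otimes>\<^bsub>T\<^esub> c [^]\<^bsub>T\<^esub> (n::int)" by blast
    have x: "x \<in> carrier T" and y: "y \<in> carrier T" using xm yn Gr_sub by blast+
    have "g \<otimes>\<^bsub>T\<^esub> h = x \<otimes>\<^bsub>T\<^esub> (c [^]\<^bsub>T\<^esub> m \<otimes>\<^bsub>T\<^esub> y) \<otimes>\<^bsub>T\<^esub> c [^]\<^bsub>T\<^esub> n"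
      using xm yn x y by (simp add: T.m_assoc)
    also have "\<dots> = x \<otimes>\<^bsub>T\<^esub> (y \<otimes>\<^bsub>T\<^esub> c [^]\<^bsub>T\<^esub> m) \<otimes>\<^bsub>T\<^esub> c [^]\<^bsub>T\<^esub> n"
      using y c_pow_central by simp
    also have "\<dots> = (x \<otimes>\<^bsub>T\<^esub> y) \<otimes>\<^bsub>T\<^esub> c [^]\<^bsub>T\<^esub> (m + n)"
      using x y by (simp add: T.m_assoc T.int_pow_mult)
    finally have "g \<otimes>\<^bsub>T\<^esub> h = (x \<otimes>\<^bsub>T\<^esub> y) \<otimes>\<^bsub>T\<^esub> c [^]\<^bsub>T\<^esub> (m + n)" .
    moreover have "x \<otimes>\<^bsub>T\<^esub> y \<in> Gr" using xm yn T.subgroupE(4)[OF Gr_subgroup] by blast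
    moreover have "g \<otimes>\<^bsub>T\<^esub> h \<in> carrier T" using \<open>g \<in> ?S\<close> \<open>h \<in> ?S\<close> by auto
    ultimately show "g \<otimes>\<^bsub>T\<^esub> h \<in> ?S" by blast
  qed
  obtain u v where uv: "u * int r + v * int p = 1" using int_gcd1[OF crp] by blast
  obtain u' v' where uv': "u' * int r + v' * int q = 1" using int_gcd1[OF crq] by blast
  have "a = a [^]\<^bsub>T\<^esub> (int r * u + int p * v)" using uv by (simp add: algebra_simps)
  also have "\<dots> = ar [^]\<^bsub>T\<^esub> u \<otimes>\<^bsub>T\<^esub> c [^]\<^bsub>T\<^esub> v"
    by (simp add: T.int_pow_mult T.int_pow_pow[symmetric] int_pow_int c_def)
  finally have aS: "a \<in> ?S" using Gr_pow[OF ar_Gr, of u] a_in by blast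
  have "b = b [^]\<^bsub>T\<^esub> (int r * u' + int q * v')" using uv' by (simp add: algebra_simps)
  also have "\<dots> = br [^]\<^bsub>T\<^esub> u' \<otimes>\<^bsub>T\<^esub> c [^]\<^bsub>T\<^esub> v'"
    by (simp add: T.int_pow_mult T.int_pow_pow[symmetric] int_pow_int c_b)
  finally have bS: "b \<in> ?S" using Gr_pow[OF br_Gr, of u'] b_in by blast
  have "?S = carrier T" using subgroup_ab[OF sub aS bS] .
  then show "g \<in> carrier T \<Longrightarrow> \<exists>x\<in>Gr. \<exists>m::int. g = x \<otimes>\<^bsub>T\<^esub> c [^]\<^bsub>T\<^esub> m" by blast
qed

lemma Gr_normal: "Gr \<lhd> T"
  unfolding T.normal_inv_iff
proof (intro conjI Gr_subgroup ballI)
  fix g h assume g: "g \<in> carrier T" and h: "h \<in> Gr"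
  obtain x m where xm: "x \<in> Gr" "g = x \<otimes>\<^bsub>T\<^esub> c [^]\<^bsub>T\<^esub> (m::int)" using decomp[OF g] by blast
  have x: "x \<in> carrier T" and hc: "h \<in> carrier T" using xm h Gr_sub by blast+
  have "g \<otimes>\<^bsub>T\<^esub> h \<otimes>\<^bsub>T\<^esub> inv\<^bsub>T\<^esub> g = x \<otimes>\<^bsub>T\<^esub> h \<otimes>\<^bsub>T\<^esub> inv\<^bsub>T\<^esub> x"
    unfolding xm(2) by (rule T.conj_central[OF x _ hc]) (use c_pow_central in auto)
  also have "\<dots> \<in> Gr" using xm(1) h Gr_subgroup by (simp add: subgroup.m_closed subgroup.m_inv_closed)
  finally show "g \<otimes>\<^bsub>T\<^esub> h \<otimes>\<^bsub>T\<^esub> inv\<^bsub>T\<^esub> g \<in> Gr" .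
qed

lemma phi_c: "phi c = c [^]\<^bsub>T\<^esub> r"
  by (simp add: c_def phih.hom_nat_pow pow_rel)

lemma genT_cr: "generate T {c [^]\<^bsub>T\<^esub> r} = range (\<lambda>k::int. c [^]\<^bsub>T\<^esub> (int r * k))"
proof -
  have "generate T {c [^]\<^bsub>T\<^esub> r} = {(c [^]\<^bsub>T\<^esub> r) [^]\<^bsub>T\<^esub> (k::int) | k. k \<in> UNIV}"
    by (rule T.generate_pow) simp
  also have "\<dots> = range (\<lambda>k::int. c [^]\<^bsub>T\<^esub> (int r * k))"
    by (auto simp: T.int_pow_pow int_pow_int[symmetric])
  finally show ?thesis .
qed

lemma center_Gr: "center Grs = generate T {c [^]\<^bsub>T\<^esub> r}"
proof
  show "generate T {c [^]\<^bsub>T\<^esub> r} \<subseteq> center Grs"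
  proof
    fix z assume "z \<in> generate T {c [^]\<^bsub>T\<^esub> r}"
    then obtain k where k: "z = c [^]\<^bsub>T\<^esub> (int r * k)" using genT_cr by auto
    show "z \<in> center Grs" unfolding center_def
      using k crk_Gr c_pow_central Gr_sub by auto
  qed
next
  show "center Grs \<subseteq> generate T {c [^]\<^bsub>T\<^esub> r}"
  proof
    fix z assume z: "z \<in> center Grs"
    then have zG: "z \<in> Gr" and zc: "\<And>g. g \<in> Gr \<Longrightarrow> z \<otimes>\<^bsub>T\<^esub> g = g \<otimes>\<^bsub>T\<^esub> z"
      by (auto simp: center_def)
    obtain z0 where z0: "z0 \<in> carrier T" "z = phi z0" using zG phi_image by auto
    have "z0 \<in> center T" unfolding center_def
    proof (intro CollectI conjI ballI z0(1))
      fix g assume g: "g \<in> carrier T"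
      have "phi (z0 \<otimes>\<^bsub>T\<^esub> g) = phi (g \<otimes>\<^bsub>T\<^esub> z0)"
        using z0 g zc[of "phi g"] phi_image by auto
      then show "z0 \<otimes>\<^bsub>T\<^esub> g = g \<otimes>\<^bsub>T\<^esub> z0"
        using phi_inj z0 g by (meson T.m_closed inj_onD)
    qed
    then obtain m where "z0 = c [^]\<^bsub>T\<^esub> (m::int)" using center_T by auto
    then have "z = c [^]\<^bsub>T\<^esub> (int r * m)"
      using z0 by (simp add: phih.hom_int_pow phi_c T.int_pow_pow int_pow_int[symmetric])
    then show "z \<in> generate T {c [^]\<^bsub>T\<^esub> r}" using genT_cr by auto
  qed
qed

lemma center_Gr_sub: "generate T {c [^]\<^bsub>T\<^esub> r} \<subseteq> center T"
  using genT_cr center_T by auto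

lemma derived_Gr: "derived Grs Gr = D"
proof -
  have inv_eq: "\<And>h. h \<in> Gr \<Longrightarrow> inv\<^bsub>Grs\<^esub> h = inv\<^bsub>T\<^esub> h"
    using T.m_inv_consistent[OF Gr_subgroup] by blast
  have ds1: "derived_set Grs Gr = derived_set T Gr"
    using inv_eq by auto
  have ds2: "derived_set T Gr = derived_set T (carrier T)"
  proof
    show "derived_set T Gr \<subseteq> derived_set T (carrier T)" using Gr_sub by blast
  next
    show "derived_set T (carrier T) \<subseteq> derived_set T Gr"
    proof
      fix w assume "w \<in> derived_set T (carrier T)"
      then obtain h1 h2 where h: "h1 \<in> carrier T" "h2 \<in> carrier T"
        "w = h1 \<otimes>\<^bsub>T\<^esub> h2 \<otimes>\<^bsub>T\<^esub> inv\<^bsub>T\<^esub> h1 \<otimes>\<^bsub>T\<^esub> inv\<^bsub>T\<^esub> h2" by blast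
      obtain x m where xm: "x \<in> Gr" "h1 = x \<otimes>\<^bsub>T\<^esub> c [^]\<^bsub>T\<^esub> (m::int)" using decomp[OF h(1)] by blast
      obtain y n where yn: "y \<in> Gr" "h2 = y \<otimes>\<^bsub>T\<^esub> c [^]\<^bsub>T\<^esub> (n::int)" using decomp[OF h(2)] by blast
      have x: "x \<in> carrier T" and y: "y \<in> carrier T" using xm yn Gr_sub by blast+
      have "w = x \<otimes>\<^bsub>T\<^esub> y \<otimes>\<^bsub>T\<^esub> inv\<^bsub>T\<^esub> x \<otimes>\<^bsub>T\<^esub> inv\<^bsub>T\<^esub> y"
        unfolding h(3) xm(2) yn(2)
        by (rule T.comm_central[OF x y]) (use c_pow_central in auto)
      then show "w \<in> derived_set T Gr" using xm(1) yn(1) by blast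
    qed
  qed
  have "derived Grs Gr = generate Grs (derived_set T Gr)" unfolding derived_def by (rule arg_cong[OF ds1])
  also have "\<dots> = generate T (derived_set T Gr)"
    by (rule T.generate_consistent[OF T.derived_set_incl[OF subset_refl Gr_subgroup] Gr_subgroup])
  finally show ?thesis by (simp add: derived_def ds2)
qed

end


context tgr begin

lemma D_normal: "D \<lhd> T" by (rule T.derived_is_normal[OF T.normal_self])
lemma D_subgroup: "subgroup D T" using D_normal normal_imp_subgroup by blast
lemma D_sub_Gr: "D \<subseteq> Gr"
proof -
  have "derived Grs Gr \<subseteq> carrier Grs"
    using group.derived_incl[OF Grs_group, of Gr "carrier Grs"] group.subgroup_self[OF Grs_group] by simp
  then show ?thesis using derived_Gr by simp
qed

lemma lam_phi: "g \<in> carrier T \<Longrightarrow> lam (phi g) = int r * lam g"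
proof -
  assume g: "g \<in> carrier T"
  have h1: "lam \<circ> phi \<in> hom T integer_group" using phi_hom lam_hom by (rule hom_compose)
  have h2: "(\<lambda>g. int r * lam g) \<in> hom T integer_group"
    by (rule homI) (simp_all add: distrib_left)
  interpret lp: group_hom T integer_group "lam \<circ> phi"
    using h1 by (simp add: group_hom_def group_hom_axioms_def)
  have "\<And>s. s \<in> {a, b} \<Longrightarrow> (lam \<circ> phi) s = int r * lam s" by (auto simp: lam_npow)
  then have "(lam \<circ> phi) g = int r * lam g"
    using lp.hom_eq_on_generate[OF h2, of "{a,b}" g] g gen_ab by auto
  then show ?thesis by simp
qed

lemma lam_Gr: "g \<in> Gr \<Longrightarrow> \<exists>g0 \<in> carrier T. g = phi g0 \<and> lam g = int r * lam g0"
proof -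
  assume "g \<in> Gr"
  then obtain g0 where "g0 \<in> carrier T" "g = phi g0" using phi_image by (metis imageE)
  then show ?thesis using lam_phi by blast
qed

lemma lam_zero_D:
  assumes g: "g \<in> carrier T" and l: "lam g = 0"
  shows "g \<in> D"
proof -
  obtain p1 q1 where bz: "p1 * int p + q1 * int q = 1" using int_gcd1[OF cop] by blast
  let ?Q = "T Mod D"
  interpret Dn: normal D T by (rule D_normal)
  have Qc: "comm_group ?Q" by (rule T.derived_quot_is_comm_group)
  then interpret Q: comm_group ?Q .
  have pih: "(\<lambda>x. D #>\<^bsub>T\<^esub> x) \<in> hom T ?Q" by (rule Dn.r_coset_hom_Mod)
  interpret pi: group_hom T ?Q "\<lambda>x. D #>\<^bsub>T\<^esub> x"
    using pih by (simp add: group_hom_def group_hom_axioms_def Q.is_group)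
  let ?A = "D #>\<^bsub>T\<^esub> a" and ?B = "D #>\<^bsub>T\<^esub> b"
  let ?X = "?A [^]\<^bsub>?Q\<^esub> q1 \<otimes>\<^bsub>?Q\<^esub> ?B [^]\<^bsub>?Q\<^esub> p1"
  have A: "?A \<in> carrier ?Q" and B: "?B \<in> carrier ?Q" by simp_all
  have "?A [^]\<^bsub>?Q\<^esub> p = D #>\<^bsub>T\<^esub> (a [^]\<^bsub>T\<^esub> p)" by (simp add: pi.hom_nat_pow)
  also have "\<dots> = D #>\<^bsub>T\<^esub> (b [^]\<^bsub>T\<^esub> q)" by (simp add: c_b[symmetric] c_def[symmetric])
  also have "\<dots> = ?B [^]\<^bsub>?Q\<^esub> q" by (simp add: pi.hom_nat_pow)
  finally have rel: "?A [^]\<^bsub>?Q\<^esub> (int p) = ?B [^]\<^bsub>?Q\<^esub> (int q)" by (simp add: int_pow_int)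
  have Aq: "?A [^]\<^bsub>?Q\<^esub> (k::int) \<in> carrier ?Q" and Bq: "?B [^]\<^bsub>?Q\<^esub> (k::int) \<in> carrier ?Q" for k
    using A B by (simp_all only: Q.int_pow_closed)
  have XA: "?X [^]\<^bsub>?Q\<^esub> (int q) = ?A"
  proof -
    have "?X [^]\<^bsub>?Q\<^esub> (int q) = (?A [^]\<^bsub>?Q\<^esub> q1) [^]\<^bsub>?Q\<^esub> (int q) \<otimes>\<^bsub>?Q\<^esub> (?B [^]\<^bsub>?Q\<^esub> p1) [^]\<^bsub>?Q\<^esub> (int q)"
      by (rule Q.int_pow_distrib[OF Aq Bq])
    also have "\<dots> = ?A [^]\<^bsub>?Q\<^esub> (q1 * int q) \<otimes>\<^bsub>?Q\<^esub> (?B [^]\<^bsub>?Q\<^esub> (int q)) [^]\<^bsub>?Q\<^esub> p1"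
      by (simp only: Q.int_pow_pow[OF A] Q.int_pow_pow[OF B] mult.commute)
    also have "\<dots> = ?A [^]\<^bsub>?Q\<^esub> (q1 * int q) \<otimes>\<^bsub>?Q\<^esub> ?A [^]\<^bsub>?Q\<^esub> (int p * p1)"
      by (simp only: rel[symmetric] Q.int_pow_pow[OF A])
    also have "\<dots> = ?A [^]\<^bsub>?Q\<^esub> (q1 * int q + int p * p1)"
      by (simp only: Q.int_pow_mult[OF A])
    also have "q1 * int q + int p * p1 = 1" using bz by (simp add: algebra_simps)
    also have "?A [^]\<^bsub>?Q\<^esub> (1::int) = ?A" using A by (rule Q.int_pow_1)
    finally show ?thesis .
  qed
  have XB: "?X [^]\<^bsub>?Q\<^esub> (int p) = ?B"
  proof -
    have "?X [^]\<^bsub>?Q\<^esub> (int p) = (?A [^]\<^bsub>?Q\<^esub> q1) [^]\<^bsub>?Q\<^esub> (int p) \<otimes>\<^bsub>?Q\<^esub> (?B [^]\<^bsub>?Q\<^esub> p1) [^]\<^bsub>?Q\<^esub> (int p)"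
      by (rule Q.int_pow_distrib[OF Aq Bq])
    also have "\<dots> = (?A [^]\<^bsub>?Q\<^esub> (int p)) [^]\<^bsub>?Q\<^esub> q1 \<otimes>\<^bsub>?Q\<^esub> ?B [^]\<^bsub>?Q\<^esub> (p1 * int p)"
      by (simp only: Q.int_pow_pow[OF A] Q.int_pow_pow[OF B] mult.commute)
    also have "\<dots> = ?B [^]\<^bsub>?Q\<^esub> (int q * q1) \<otimes>\<^bsub>?Q\<^esub> ?B [^]\<^bsub>?Q\<^esub> (p1 * int p)"
      by (simp only: rel Q.int_pow_pow[OF B])
    also have "\<dots> = ?B [^]\<^bsub>?Q\<^esub> (int q * q1 + p1 * int p)"
      by (simp only: Q.int_pow_mult[OF B])
    also have "int q * q1 + p1 * int p = 1" using bz by (simp add: algebra_simps)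
    also have "?B [^]\<^bsub>?Q\<^esub> (1::int) = ?B" using B by (rule Q.int_pow_1)
    finally show ?thesis .
  qed
  have X: "?X \<in> carrier ?Q" by (rule Q.m_closed[OF Aq Bq])
  have h2: "(\<lambda>n. ?X [^]\<^bsub>?Q\<^esub> n) \<circ> lam \<in> hom T ?Q"
    using lam_hom Q.hom_integer_group_pow[OF X] by (rule hom_compose)
  have ab_eq: "\<And>s. s \<in> {a, b} \<Longrightarrow> D #>\<^bsub>T\<^esub> s = ((\<lambda>n. ?X [^]\<^bsub>?Q\<^esub> n) \<circ> lam) s"
    using XA XB by (auto simp only: comp_def lam_a lam_b insert_iff empty_iff)
  have gg: "g \<in> generate T {a, b}" using g gen_ab by simp
  have "D #>\<^bsub>T\<^esub> g = ((\<lambda>n. ?X [^]\<^bsub>?Q\<^esub> n) \<circ> lam) g"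
    by (rule pi.hom_eq_on_generate[OF h2 _ ab_eq gg]) simp
  then have "D #>\<^bsub>T\<^esub> g = D" using l by (simp only: comp_def int_pow_0 one_FactGroup)
  then show ?thesis using T.rcos_eq_self[OF D_subgroup g] by simp
qed

lemma rcos_Grs: "H #>\<^bsub>Grs\<^esub> x = H #>\<^bsub>T\<^esub> x"
  by (simp add: r_coset_def)

lemma Dr_normal: "D \<lhd> Grs"
proof -
  have "carrier Grs \<lhd> Grs" by (rule group.normal_self[OF Grs_group])
  then have "derived Grs Gr \<lhd> Grs" using group.derived_is_normal[OF Grs_group] by simp
  then show ?thesis using derived_Gr by simp
qed

lemma part3a:
  assumes bz: "int p * p1 + int q * q1 = 1"
  defines "xr \<equiv> ar [^]\<^bsub>T\<^esub> q1 \<otimes>\<^bsub>T\<^esub> br [^]\<^bsub>T\<^esub> p1"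
  shows "generate (Grs Mod D) {D #>\<^bsub>T\<^esub> xr} = carrier (Grs Mod D)"
proof -
  let ?Q = "Grs Mod D"
  interpret Dn: normal D Grs by (rule Dr_normal)
  have Qg: "group ?Q" by (rule Dn.factorgroup_is_group)
  have pih: "(\<lambda>x. D #>\<^bsub>Grs\<^esub> x) \<in> hom Grs ?Q" by (rule Dn.r_coset_hom_Mod)
  interpret pi: group_hom Grs ?Q "\<lambda>x. D #>\<^bsub>Grs\<^esub> x"
    using pih Qg by (simp add: group_hom_def group_hom_axioms_def Grs_group)
  have xrG: "xr \<in> Gr" unfolding xr_def
    by (rule subgroup.m_closed[OF Gr_subgroup Gr_pow[OF ar_Gr] Gr_pow[OF br_Gr]])
  have xrc: "xr \<in> carrier T" using xrG Gr_sub by blast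
  have lxr: "lam xr = int r"
  proof -
    have "lam xr = q1 * (int r * int q) + p1 * (int r * int p)"
      by (simp add: xr_def lam_ipow lam_npow)
    also have "\<dots> = int r * (int p * p1 + int q * q1)" by (simp add: algebra_simps)
    finally show ?thesis using bz by simp
  qed
  have X: "D #>\<^bsub>T\<^esub> xr \<in> carrier ?Q"
    unfolding FactGroup_def RCOSETS_def using xrG by (auto simp: rcos_Grs)
  show ?thesis
  proof
    show "generate ?Q {D #>\<^bsub>T\<^esub> xr} \<subseteq> carrier ?Q"
      using group.generate_incl[OF Qg] X by blast
  next
    show "carrier ?Q \<subseteq> generate ?Q {D #>\<^bsub>T\<^esub> xr}"
    proof
      fix Y assume "Y \<in> carrier ?Q"
      then obtain g where g: "g \<in> Gr" "Y = D #>\<^bsub>T\<^esub> g"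
        by (auto simp: FactGroup_def RCOSETS_def rcos_Grs)
      have gc: "g \<in> carrier T" using g Gr_sub by blast
      obtain g0 where g0: "g0 \<in> carrier T" "lam g = int r * lam g0" using lam_Gr[OF g(1)] by blast
      let ?n = "lam g0"
      have pw: "xr [^]\<^bsub>T\<^esub> ?n \<in> carrier T" using xrc by simp
      have "lam (g \<otimes>\<^bsub>T\<^esub> inv\<^bsub>T\<^esub> (xr [^]\<^bsub>T\<^esub> ?n)) = 0"
        using gc xrc g0 by (simp add: lam_ipow lxr)
      then have hD: "g \<otimes>\<^bsub>T\<^esub> inv\<^bsub>T\<^esub> (xr [^]\<^bsub>T\<^esub> ?n) \<in> D" using lam_zero_D gc pw by simp
      have "D #>\<^bsub>T\<^esub> g = (D #>\<^bsub>T\<^esub> (g \<otimes>\<^bsub>T\<^esub> inv\<^bsub>T\<^esub> (xr [^]\<^bsub>T\<^esub> ?n))) #>\<^bsub>T\<^esub> (xr [^]\<^bsub>T\<^esub> ?n)"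
        using gc pw D_subgroup by (simp add: T.coset_mult_assoc subgroup.subset T.m_assoc)
      also have "\<dots> = D #>\<^bsub>T\<^esub> (xr [^]\<^bsub>T\<^esub> ?n)"
        using subgroup.rcos_const[OF D_subgroup T.is_group hD] by simp
      also have "xr [^]\<^bsub>T\<^esub> ?n = xr [^]\<^bsub>Grs\<^esub> ?n"
        by (rule T.int_pow_consistent[OF Gr_subgroup xrG])
      also have "D #>\<^bsub>T\<^esub> (xr [^]\<^bsub>Grs\<^esub> ?n) = (D #>\<^bsub>T\<^esub> xr) [^]\<^bsub>?Q\<^esub> ?n"
        using pi.hom_int_pow[of xr ?n] xrG by (simp add: rcos_Grs)
      finally have "Y = (D #>\<^bsub>T\<^esub> xr) [^]\<^bsub>?Q\<^esub> ?n" using g by simp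
      then show "Y \<in> generate ?Q {D #>\<^bsub>T\<^esub> xr}"
        using group.generate_pow[OF Qg X] by auto
    qed
  qed
qed

lemma part3b:
  assumes bz: "int p * p1 + int q * q1 = 1"
  defines "xr \<equiv> ar [^]\<^bsub>T\<^esub> q1 \<otimes>\<^bsub>T\<^esub> br [^]\<^bsub>T\<^esub> p1"
  shows "normal_closure T {xr} = Gr \<and> normal_closure Grs {xr} = Gr"
proof -
  have xrG: "xr \<in> Gr" unfolding xr_def
    by (rule subgroup.m_closed[OF Gr_subgroup Gr_pow[OF ar_Gr] Gr_pow[OF br_Gr]])
  have xrc: "xr \<in> carrier T" using xrG Gr_sub by blast
  have rel: "ar [^]\<^bsub>T\<^esub> p = br [^]\<^bsub>T\<^esub> q" by (simp add: pow_rel)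
  let ?N = "normal_closure T {xr}"
  have Nn: "?N \<lhd> T" using T.normal_closure_normal xrc by simp
  have "xr \<in> ?N" using T.in_normal_closure xrc by simp
  then have "ar \<in> ?N \<and> br \<in> ?N"
    using T.pq_normal[OF Nn ar_in br_in rel bz] by (simp add: xr_def)
  then have "Gr \<subseteq> ?N"
    using T.generate_subgroup_incl[of "{ar, br}" ?N] Nn normal_imp_subgroup by blast
  moreover have "?N \<subseteq> Gr" using T.normal_closure_sub[OF Gr_normal] xrG by simp
  ultimately have 1: "?N = Gr" by blast
  interpret Grs: group Grs by (rule Grs_group)
  let ?M = "normal_closure Grs {xr}"
  have Mn: "?M \<lhd> Grs" using Grs.normal_closure_normal xrG by simp
  have arG: "ar \<in> carrier Grs" "br \<in> carrier Grs" using ar_Gr br_Gr by simp_all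
  have rel': "ar [^]\<^bsub>Grs\<^esub> p = br [^]\<^bsub>Grs\<^esub> q"
    using rel T.nat_pow_consistent by simp
  have xr': "ar [^]\<^bsub>Grs\<^esub> q1 \<otimes>\<^bsub>Grs\<^esub> br [^]\<^bsub>Grs\<^esub> p1 = xr"
    using T.int_pow_consistent[OF Gr_subgroup ar_Gr, of q1] T.int_pow_consistent[OF Gr_subgroup br_Gr, of p1]
    by (simp add: xr_def)
  have "xr \<in> ?M" using Grs.in_normal_closure xrG by simp
  then have "ar \<in> ?M \<and> br \<in> ?M"
    using Grs.pq_normal[OF Mn arG rel' bz] xr' by simp
  then have "generate Grs {ar, br} \<subseteq> ?M"
    using Grs.generate_subgroup_incl[of "{ar, br}" ?M] Mn normal_imp_subgroup by blast
  moreover have "generate Grs {ar, br} = Gr"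
    using T.generate_consistent[OF _ Gr_subgroup, of "{ar,br}"] ar_Gr br_Gr by simp
  moreover have "?M \<subseteq> Gr"
    using Grs.normal_closure_sub[OF Grs.normal_self] xrG by simp
  ultimately have 2: "?M = Gr" by blast
  show ?thesis using 1 2 by simp
qed

end


context tgr begin

abbreviation "Zr \<equiv> integer_mod_group r"

lemma r_pos: "int r > 0" using r1 by simp

lemma carrier_Zr: "carrier Zr = {0..<int r}" using r1 by (simp add: carrier_integer_mod_group)

lemma exists_lam1: "\<exists>x0 \<in> carrier T. lam x0 = 1"
proof -
  obtain p1 q1 where bz: "p1 * int p + q1 * int q = 1" using int_gcd1[OF cop] by blast
  have "lam (a [^]\<^bsub>T\<^esub> q1 \<otimes>\<^bsub>T\<^esub> b [^]\<^bsub>T\<^esub> p1) = 1"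
    using bz by (simp add: lam_ipow algebra_simps)
  then show ?thesis by (intro bexI[of _ "a [^]\<^bsub>T\<^esub> q1 \<otimes>\<^bsub>T\<^esub> b [^]\<^bsub>T\<^esub> p1"]) simp_all
qed

lemma iso1: "T Mod Gr \<cong> Zr"
proof -
  define h1 where "h1 = (\<lambda>g. lam g mod int r)"
  have hom: "h1 \<in> hom T Zr"
  proof (rule homI)
    fix x assume "x \<in> carrier T"
    then show "h1 x \<in> carrier Zr" using r_pos by (simp add: h1_def carrier_Zr)
  next
    fix x y assume "x \<in> carrier T" "y \<in> carrier T"
    then show "h1 (x \<otimes>\<^bsub>T\<^esub> y) = h1 x \<otimes>\<^bsub>Zr\<^esub> h1 y"
      by (simp add: h1_def mod_add_eq)
  qed
  have "group_hom T Zr h1" unfolding group_hom_def group_hom_axioms_def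
    using T.is_group group_integer_mod_group hom by blast
  then interpret h: group_hom T Zr h1 .
  have img: "h1 ` carrier T = carrier Zr"
  proof
    show "h1 ` carrier T \<subseteq> carrier Zr" using h.hom_closed by blast
  next
    show "carrier Zr \<subseteq> h1 ` carrier T"
    proof
      fix j assume j: "j \<in> carrier Zr"
      obtain x0 where x0: "x0 \<in> carrier T" "lam x0 = 1" using exists_lam1 by blast
      have "h1 (x0 [^]\<^bsub>T\<^esub> j) = j" using j x0 by (simp add: h1_def lam_ipow carrier_Zr)
      then show "j \<in> h1 ` carrier T" using x0 by (metis T.int_pow_closed image_eqI)
    qed
  qed
  have ker: "kernel T Zr h1 = Gr"
  proof
    show "Gr \<subseteq> kernel T Zr h1"
    proof
      fix g assume g: "g \<in> Gr"
      obtain g0 where "g0 \<in> carrier T" "lam g = int r * lam g0" using lam_Gr[OF g] by blast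
      then show "g \<in> kernel T Zr h1" using g Gr_sub by (auto simp: kernel_def h1_def)
    qed
  next
    show "kernel T Zr h1 \<subseteq> Gr"
    proof
      fix g assume "g \<in> kernel T Zr h1"
      then have g: "g \<in> carrier T" and d: "int r dvd lam g" by (auto simp: kernel_def h1_def)
      obtain y m where ym: "y \<in> Gr" "g = y \<otimes>\<^bsub>T\<^esub> c [^]\<^bsub>T\<^esub> (m::int)" using decomp[OF g] by blast
      have yc: "y \<in> carrier T" using ym Gr_sub by blast
      obtain y0 where y0: "lam y = int r * lam y0" using lam_Gr[OF ym(1)] by blast
      have "lam g = int r * lam y0 + m * (int p * int q)" using ym yc y0 by (simp add: lam_ipow)
      then have "int r dvd m * (int p * int q)" using d by (metis dvd_add_right_iff dvd_triv_left)
      moreover have "coprime (int r) (int p * int q)" using crp crq by simp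
      ultimately have "int r dvd m" using coprime_dvd_mult_left_iff by blast
      then obtain k where "m = int r * k" by (elim dvdE)
      then have "c [^]\<^bsub>T\<^esub> m \<in> Gr" using crk_Gr by simp
      then show "g \<in> Gr" unfolding ym(2) by (rule subgroup.m_closed[OF Gr_subgroup ym(1)])
    qed
  qed
  show ?thesis using h.FactGroup_iso[OF img] ker by simp
qed

lemma Gr_image: "(\<lambda>g. D #>\<^bsub>T\<^esub> g) ` Gr = carrier (Grs Mod D)"
  by (auto simp: FactGroup_def RCOSETS_def rcos_Grs)

lemma isoK: "T Mod Gr \<cong> (T Mod D) Mod carrier (Grs Mod D)"
proof -
  let ?Q0 = "T Mod D"
  let ?K = "carrier (Grs Mod D)"
  interpret Dn: normal D T by (rule D_normal)
  have Qc: "comm_group ?Q0" by (rule T.derived_quot_is_comm_group)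
  interpret Q: comm_group ?Q0 by (rule Qc)
  have pih: "(\<lambda>x. D #>\<^bsub>T\<^esub> x) \<in> hom T ?Q0" by (rule Dn.r_coset_hom_Mod)
  interpret pi: group_hom T ?Q0 "\<lambda>x. D #>\<^bsub>T\<^esub> x"
    using pih by (simp add: group_hom_def group_hom_axioms_def Q.is_group)
  have Ksub: "subgroup ?K ?Q0"
    using pi.subgroup_img_is_subgroup[OF Gr_subgroup] Gr_image by simp
  interpret Kn: normal ?K ?Q0 using Q.subgroup_imp_normal[OF Ksub] .
  have pi2: "(\<lambda>Y. r_coset ?Q0 ?K Y) \<in> hom ?Q0 (?Q0 Mod ?K)" by (rule Kn.r_coset_hom_Mod)
  have Q2: "group (?Q0 Mod ?K)" by (rule Kn.factorgroup_is_group)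
  define h where "h = (\<lambda>Y. r_coset ?Q0 ?K Y) \<circ> (\<lambda>x. D #>\<^bsub>T\<^esub> x)"
  have hh: "h \<in> hom T (?Q0 Mod ?K)" unfolding h_def using pih pi2 by (rule hom_compose)
  interpret h: group_hom T "?Q0 Mod ?K" h
    using hh Q2 by (simp add: group_hom_def group_hom_axioms_def)
  have img: "h ` carrier T = carrier (?Q0 Mod ?K)"
    unfolding h_def carrier_FactGroup[of ?Q0 ?K] carrier_FactGroup[of T D] by (simp add: image_comp)
  have ker: "kernel T (?Q0 Mod ?K) h = Gr"
  proof
    show "kernel T (?Q0 Mod ?K) h \<subseteq> Gr"
    proof
      fix g assume "g \<in> kernel T (?Q0 Mod ?K) h"
      then have g: "g \<in> carrier T" and e: "r_coset ?Q0 ?K (D #>\<^bsub>T\<^esub> g) = ?K"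
        by (auto simp: kernel_def h_def)
      have "D #>\<^bsub>T\<^esub> g \<in> carrier ?Q0" using g by simp
      then have "D #>\<^bsub>T\<^esub> g \<in> ?K" using Q.rcos_eq_self[OF Ksub] e by blast
      then obtain y where y: "y \<in> Gr" "D #>\<^bsub>T\<^esub> g = D #>\<^bsub>T\<^esub> y" using Gr_image by blast
      have "g \<in> D #>\<^bsub>T\<^esub> y" using T.rcos_self[OF g D_subgroup] y by simp
      then obtain d where d: "d \<in> D" "g = d \<otimes>\<^bsub>T\<^esub> y" unfolding r_coset_def by blast
      have "d \<in> Gr" using d(1) D_sub_Gr by blast
      then show "g \<in> Gr" unfolding d(2) by (rule subgroup.m_closed[OF Gr_subgroup _ y(1)])
    qed
  next
    show "Gr \<subseteq> kernel T (?Q0 Mod ?K) h"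
    proof
      fix g assume g: "g \<in> Gr"
      then have gc: "g \<in> carrier T" using Gr_sub by blast
      have "D #>\<^bsub>T\<^esub> g \<in> ?K" using g Gr_image by blast
      then have "r_coset ?Q0 ?K (D #>\<^bsub>T\<^esub> g) = ?K"
        using subgroup.rcos_const[OF Ksub Q.is_group] by blast
      then show "g \<in> kernel T (?Q0 Mod ?K) h" using gc by (simp add: kernel_def h_def)
    qed
  qed
  show ?thesis using h.FactGroup_iso[OF img] ker by simp
qed

lemma center_sub: "subgroup (center T) T"
  unfolding center_T by (rule T.subgroup_of_powers) simp

abbreviation "Zc \<equiv> T\<lparr>carrier := center T\<rparr>"

lemma iso3: "Zc Mod center Grs \<cong> Zr \<and> group (Zc Mod center Grs)"
proof -
  have Zg: "group Zc" by (rule T.subgroup_imp_group[OF center_sub])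
  define h3 where "h3 = (\<lambda>z. (lam z div (int p * int q)) mod int r)"
  have pq0: "int p * int q \<noteq> 0" using p2 q2 by simp
  have hc: "h3 (c [^]\<^bsub>T\<^esub> m) = m mod int r" for m :: int
    using pq0 by (simp add: h3_def lam_ipow)
  have cm: "z \<in> center T \<Longrightarrow> \<exists>m::int. z = c [^]\<^bsub>T\<^esub> m" for z using center_T by auto
  have hom: "h3 \<in> hom Zc Zr"
  proof (rule homI)
    fix x assume "x \<in> carrier Zc"
    then show "h3 x \<in> carrier Zr" using r_pos by (simp add: h3_def carrier_Zr)
  next
    fix x y assume xy: "x \<in> carrier Zc" "y \<in> carrier Zc"
    obtain m :: int where m: "x = c [^]\<^bsub>T\<^esub> m" using cm xy by auto
    obtain n :: int where n: "y = c [^]\<^bsub>T\<^esub> n" using cm xy by auto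
    note m n
    then show "h3 (x \<otimes>\<^bsub>Zc\<^esub> y) = h3 x \<otimes>\<^bsub>Zr\<^esub> h3 y"
      by (simp add: T.int_pow_mult[symmetric] hc mod_add_eq)
  qed
  have "group_hom Zc Zr h3" unfolding group_hom_def group_hom_axioms_def
    using Zg group_integer_mod_group hom by blast
  then interpret h: group_hom Zc Zr h3 .
  have img: "h3 ` carrier Zc = carrier Zr"
  proof
    show "h3 ` carrier Zc \<subseteq> carrier Zr" using h.hom_closed by blast
  next
    show "carrier Zr \<subseteq> h3 ` carrier Zc"
    proof
      fix j assume j: "j \<in> carrier Zr"
      have "h3 (c [^]\<^bsub>T\<^esub> j) = j" using j by (simp add: hc carrier_Zr)
      moreover have "c [^]\<^bsub>T\<^esub> j \<in> carrier Zc" using center_T by auto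
      ultimately show "j \<in> h3 ` carrier Zc" by (metis image_eqI)
    qed
  qed
  have ker: "kernel Zc Zr h3 = center Grs"
  proof
    show "kernel Zc Zr h3 \<subseteq> center Grs"
    proof
      fix z assume "z \<in> kernel Zc Zr h3"
      then have z: "z \<in> center T" and e: "h3 z = 0" by (auto simp: kernel_def)
      obtain m where m: "z = c [^]\<^bsub>T\<^esub> (m::int)" using cm[OF z] by blast
      then have "int r dvd m" using e hc by (simp add: dvd_eq_mod_eq_0)
      then obtain k where "m = int r * k" by (elim dvdE)
      then show "z \<in> center Grs" using m center_Gr genT_cr by auto
    qed
  next
    show "center Grs \<subseteq> kernel Zc Zr h3"
    proof
      fix z assume "z \<in> center Grs"
      then obtain k where k: "z = c [^]\<^bsub>T\<^esub> (int r * k)" using center_Gr genT_cr by auto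
      then have "z \<in> center T" using center_T by auto
      moreover have "h3 z = 0" using k hc by simp
      ultimately show "z \<in> kernel Zc Zr h3" by (simp add: kernel_def)
    qed
  qed
  have "Zc Mod center Grs \<cong> Zr" using h.FactGroup_iso[OF img] ker by simp
  moreover have "group (Zc Mod center Grs)"
    using normal.factorgroup_is_group[OF h.normal_kernel] ker by simp
  ultimately show ?thesis by simp
qed

lemma last_part: "(\<lambda>g. center T #>\<^bsub>T\<^esub> g) ` Gr = carrier (T Mod center T)"
proof
  show "(\<lambda>g. center T #>\<^bsub>T\<^esub> g) ` Gr \<subseteq> carrier (T Mod center T)"
    using Gr_sub by (auto simp: carrier_FactGroup)
next
  show "carrier (T Mod center T) \<subseteq> (\<lambda>g. center T #>\<^bsub>T\<^esub> g) ` Gr"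
  proof
    fix Y assume "Y \<in> carrier (T Mod center T)"
    then obtain g where g: "g \<in> carrier T" "Y = center T #>\<^bsub>T\<^esub> g" by (auto simp: carrier_FactGroup)
    obtain y m where ym: "y \<in> Gr" "g = y \<otimes>\<^bsub>T\<^esub> c [^]\<^bsub>T\<^esub> (m::int)" using decomp[OF g(1)] by blast
    have yc: "y \<in> carrier T" using ym Gr_sub by blast
    have cz: "c [^]\<^bsub>T\<^esub> m \<in> center T" using center_T by auto
    have "center T #>\<^bsub>T\<^esub> g = center T #>\<^bsub>T\<^esub> (c [^]\<^bsub>T\<^esub> m \<otimes>\<^bsub>T\<^esub> y)"
      using ym yc c_pow_central by simp
    also have "\<dots> = (center T #>\<^bsub>T\<^esub> c [^]\<^bsub>T\<^esub> m) #>\<^bsub>T\<^esub> y"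
      using yc center_sub by (simp add: T.coset_mult_assoc subgroup.subset)
    also have "\<dots> = center T #>\<^bsub>T\<^esub> y"
      using subgroup.rcos_const[OF center_sub T.is_group cz] by simp
    finally show "Y \<in> (\<lambda>g. center T #>\<^bsub>T\<^esub> g) ` Gr" using g ym by blast
  qed
qed

end


theorem mainTheorem18:
  fixes p q r :: nat
  assumes "p \<ge> 2" and "q \<ge> 2" and "coprime p q"
      and "r \<ge> 1" and "coprime r p" and "coprime r q"
  defines "G \<equiv> Gt p q"
      and "\<alpha> \<equiv> galpha p q" and "\<beta> \<equiv> gbeta p q"
      and "c \<equiv> galpha p q [^]\<^bsub>Gt p q\<^esub> p"
      and "\<alpha>r \<equiv> galpha p q [^]\<^bsub>Gt p q\<^esub> r"
      and "\<beta>r \<equiv> gbeta p q [^]\<^bsub>Gt p q\<^esub> r"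
      and "Gr \<equiv> generate (Gt p q) {galpha p q [^]\<^bsub>Gt p q\<^esub> r, gbeta p q [^]\<^bsub>Gt p q\<^esub> r}"
  shows
    "(\<exists>\<phi>. \<phi> \<in> iso G (G\<lparr>carrier := Gr\<rparr>) \<and> \<phi> \<alpha> = \<alpha>r \<and> \<phi> \<beta> = \<beta>r)
     \<and> center (G\<lparr>carrier := Gr\<rparr>) = generate G {c [^]\<^bsub>G\<^esub> r}
     \<and> generate G {c [^]\<^bsub>G\<^esub> r} \<subseteq> center G
     \<and> derived (G\<lparr>carrier := Gr\<rparr>) Gr = derived G (carrier G)
     \<and> (\<forall>p1 q1 :: int. int p * p1 + int q * q1 = 1 \<longrightarrow>
          (let xr = \<alpha>r [^]\<^bsub>G\<^esub> q1 \<otimes>\<^bsub>G\<^esub> \<beta>r [^]\<^bsub>G\<^esub> p1 in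
             generate (G\<lparr>carrier := Gr\<rparr> Mod derived (G\<lparr>carrier := Gr\<rparr>) Gr)
                 {derived (G\<lparr>carrier := Gr\<rparr>) Gr #>\<^bsub>G\<^esub> xr}
               = carrier (G\<lparr>carrier := Gr\<rparr> Mod derived (G\<lparr>carrier := Gr\<rparr>) Gr)
             \<and> normal_closure G {xr} = Gr
             \<and> normal_closure (G\<lparr>carrier := Gr\<rparr>) {xr} = Gr))
     \<and> Gr \<lhd> G
     \<and> (G Mod Gr) \<cong> ((G Mod derived G (carrier G))
                        Mod carrier (G\<lparr>carrier := Gr\<rparr> Mod derived (G\<lparr>carrier := Gr\<rparr>) Gr))
     \<and> ((G Mod derived G (carrier G))
           Mod carrier (G\<lparr>carrier := Gr\<rparr> Mod derived (G\<lparr>carrier := Gr\<rparr>) Gr))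
         \<cong> (G\<lparr>carrier := center G\<rparr> Mod center (G\<lparr>carrier := Gr\<rparr>))
     \<and> (G\<lparr>carrier := center G\<rparr> Mod center (G\<lparr>carrier := Gr\<rparr>)) \<cong> integer_mod_group r
     \<and> (\<lambda>g. center G #>\<^bsub>G\<^esub> g) ` Gr = carrier (G Mod center G)"
proof -
  interpret X: tgr p q r
    using assms(1-6) by (simp add: tgr_def tg_def tgr_axioms_def)
  have cc: "c = tg.c p q" unfolding c_def X.c_def ..
  have der: "derived (G\<lparr>carrier := Gr\<rparr>) Gr = derived G (carrier G)"
    unfolding G_def Gr_def by (rule X.derived_Gr)
  have gT: "group (Gt p q Mod Gr)" unfolding Gr_def
    using X.Gr_normal by (rule normal.factorgroup_is_group)
  have isoK: "(G Mod Gr) \<cong> ((G Mod derived G (carrier G))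
                        Mod carrier (G\<lparr>carrier := Gr\<rparr> Mod derived (G\<lparr>carrier := Gr\<rparr>) Gr))"
    unfolding der unfolding G_def Gr_def by (rule X.isoK)
  have iso1: "G Mod Gr \<cong> integer_mod_group r" unfolding G_def Gr_def by (rule X.iso1)
  have iso3: "(G\<lparr>carrier := center G\<rparr> Mod center (G\<lparr>carrier := Gr\<rparr>)) \<cong> integer_mod_group r"
    and g3: "group (G\<lparr>carrier := center G\<rparr> Mod center (G\<lparr>carrier := Gr\<rparr>))"
    unfolding G_def Gr_def using X.iso3 by auto
  have iso2: "((G Mod derived G (carrier G))
           Mod carrier (G\<lparr>carrier := Gr\<rparr> Mod derived (G\<lparr>carrier := Gr\<rparr>) Gr))
         \<cong> (G\<lparr>carrier := center G\<rparr> Mod center (G\<lparr>carrier := Gr\<rparr>))"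
  proof -
    have "((G Mod derived G (carrier G))
           Mod carrier (G\<lparr>carrier := Gr\<rparr> Mod derived (G\<lparr>carrier := Gr\<rparr>) Gr)) \<cong> G Mod Gr"
      using group.iso_sym[OF gT] isoK unfolding G_def by blast
    also have "\<dots> \<cong> integer_mod_group r" by (rule iso1)
    also have "integer_mod_group r \<cong> (G\<lparr>carrier := center G\<rparr> Mod center (G\<lparr>carrier := Gr\<rparr>))"
      using group.iso_sym[OF g3 iso3] .
    finally show ?thesis .
  qed
  have part1: "\<exists>\<phi>. \<phi> \<in> iso G (G\<lparr>carrier := Gr\<rparr>) \<and> \<phi> \<alpha> = \<alpha>r \<and> \<phi> \<beta> = \<beta>r"
    unfolding G_def Gr_def \<alpha>_def \<beta>_def \<alpha>r_def \<beta>r_def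
    using X.phi_iso X.phi_a X.phi_b by blast
  have part2: "center (G\<lparr>carrier := Gr\<rparr>) = generate G {c [^]\<^bsub>G\<^esub> r}"
    unfolding G_def Gr_def cc by (rule X.center_Gr)
  have part3: "generate G {c [^]\<^bsub>G\<^esub> r} \<subseteq> center G"
    unfolding G_def cc by (rule X.center_Gr_sub)
  have part5: "\<forall>p1 q1 :: int. int p * p1 + int q * q1 = 1 \<longrightarrow>
          (let xr = \<alpha>r [^]\<^bsub>G\<^esub> q1 \<otimes>\<^bsub>G\<^esub> \<beta>r [^]\<^bsub>G\<^esub> p1 in
             generate (G\<lparr>carrier := Gr\<rparr> Mod derived (G\<lparr>carrier := Gr\<rparr>) Gr)
                 {derived (G\<lparr>carrier := Gr\<rparr>) Gr #>\<^bsub>G\<^esub> xr}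
               = carrier (G\<lparr>carrier := Gr\<rparr> Mod derived (G\<lparr>carrier := Gr\<rparr>) Gr)
             \<and> normal_closure G {xr} = Gr
             \<and> normal_closure (G\<lparr>carrier := Gr\<rparr>) {xr} = Gr)"
  proof (intro allI impI)
    fix p1 q1 :: int assume bz: "int p * p1 + int q * q1 = 1"
    show "let xr = \<alpha>r [^]\<^bsub>G\<^esub> q1 \<otimes>\<^bsub>G\<^esub> \<beta>r [^]\<^bsub>G\<^esub> p1 in
             generate (G\<lparr>carrier := Gr\<rparr> Mod derived (G\<lparr>carrier := Gr\<rparr>) Gr)
                 {derived (G\<lparr>carrier := Gr\<rparr>) Gr #>\<^bsub>G\<^esub> xr}
               = carrier (G\<lparr>carrier := Gr\<rparr> Mod derived (G\<lparr>carrier := Gr\<rparr>) Gr)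
             \<and> normal_closure G {xr} = Gr
             \<and> normal_closure (G\<lparr>carrier := Gr\<rparr>) {xr} = Gr"
      unfolding Let_def der unfolding G_def Gr_def \<alpha>r_def \<beta>r_def
      using X.part3a[OF bz] X.part3b[OF bz] by blast
  qed
  have part6: "Gr \<lhd> G" unfolding G_def Gr_def by (rule X.Gr_normal)
  have part10: "(\<lambda>g. center G #>\<^bsub>G\<^esub> g) ` Gr = carrier (G Mod center G)"
    unfolding G_def Gr_def by (rule X.last_part)
  show ?thesis
    using part1 part2 part3 der part5 part6 isoK iso2 iso3 part10 by blast
qed


end
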